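(* Let $(\Omega,\mathcal F,\mu)$ be a measure space, $p\in[1,\infty)$, $k\ge1$ and $f\in L^p(\Omega,\mathcal F,\mu)$. Then: (i) $\mathscr D_{p,k+1}(f)\le\mathrm{Var}_{p,k}(f)\le 2\mathscr D_{p,k}(f)$. (ii) If $\mu$ is finite, $\mathscr D_{p,k}(f)\le\mathrm{Var}_{p,k}(f,\Omega)\le\mathrm{Var}_{p,k}(f)\le2\mathscr D_{p,k}(f)\le2\mathrm{Var}_{p,k}(f,\Omega)$. (iii) If $\mu$ has no atoms of infinite measure, then $\mathscr D_{p,k}(f)\le\mathrm{Var}_{p,k}(f)\le2\mathscr D_{p,k}(f)$.
   Context: All measures are assumed not identically zero. $\mathscr G_{p,k}$ is the set of functions $\sum_{i=1}^l a_i\mathbf 1_{A_i}\in L^p$ with $l\le k$, $\{A_i\}$ a measurable partition of $\Omega$, $a_i\in\mathbb R$; $\mathscr D_{p,k}(f)=\inf\{\|f-h\|_p:\ h\in\mathscr G_{p,k}\}$. $p$-variation: for measurable $A$ with $\mu(A)<\infty$, $\mathrm{var}_p(f,A)^p=\frac1{\mu(A)}\int_{A\times A}|f(x)-f(y)|^p\,d\mu(x)d\mu(y)$ if $\mu(A)>0$ and $0$ otherwise; for a finite collection $\mathcal P=(A_i)$ of disjoint measurable sets of finite measure, $\mathrm{var}_p(f,\mathcal P)=(\sum_i\mathrm{var}_p(f,A_i)^p)^{1/p}$; $\mathrm{Var}_{p,k}(f,A)=\inf\{\mathrm{var}_p(f,\mathcal P):\ \mathcal P$ a measurable partition of $A$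 with at most $k$ sets$\}$; $\mathrm{Var}_{p,k}(f)=\sup\{\mathrm{Var}_{p,k}(f,A):\ A\in\mathcal F,\ \mu(A)<\infty\}$. An atom is a measurable $A$ with $\mu(A)>0$ such that every measurable $B\subset A$ with $\mu(B)<\mu(A)$ satisfies $\mu(B)=0$. *)

theory Defs
  imports "HOL-Analysis.Analysis"
begin

definition memLp :: "'a measure \<Rightarrow> real \<Rightarrow> ('a \<Rightarrow> real) \<Rightarrow> bool" where
  "memLp M p f \<longleftrightarrow> f \<in> borel_measurable M \<and> integrable M (\<lambda>x. \<bar>f x\<bar> powr p)"

definition Lp_dist :: "'a measure \<Rightarrow> real \<Rightarrow> ('a \<Rightarrow> real) \<Rightarrow> ('a \<Rightarrow> real) \<Rightarrow> real" where
  "Lp_dist M p f h = (enn2real (\<integral>\<^sup>+ x. ennreal (\<bar>f x - h x\<bar> powr p) \<partial>M)) powr (1 / p)"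

definition Gpk :: "'a measure \<Rightarrow> real \<Rightarrow> nat \<Rightarrow> ('a \<Rightarrow> real) set" where
  "Gpk M p k = {h. memLp M p h \<and>
     (\<exists>l A a. l \<le> k \<and> (\<forall>i<l. A i \<in> sets M) \<and> disjoint_family_on A {..<l} \<and>
        (\<Union>i<l. A i) = space M \<and> h = (\<lambda>x. \<Sum>i<l. a i * indicator (A i) x))}"

definition Dpk :: "'a measure \<Rightarrow> real \<Rightarrow> nat \<Rightarrow> ('a \<Rightarrow> real) \<Rightarrow> real" where
  "Dpk M p k f = Inf {Lp_dist M p f h | h. h \<in> Gpk M p k}"

definition varp :: "'a measure \<Rightarrow> real \<Rightarrow> ('a \<Rightarrow> real) \<Rightarrow> 'a set \<Rightarrow> real" where
  "varp M p f A = (if emeasure M A > 0 then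
     (enn2real (\<integral>\<^sup>+ x\<in>A. (\<integral>\<^sup>+ y\<in>A. ennreal (\<bar>f x - f y\<bar> powr p) \<partial>M) \<partial>M) / measure M A) powr (1 / p)
   else 0)"

definition varp_fam :: "'a measure \<Rightarrow> real \<Rightarrow> ('a \<Rightarrow> real) \<Rightarrow> nat \<Rightarrow> (nat \<Rightarrow> 'a set) \<Rightarrow> real" where
  "varp_fam M p f l B = (\<Sum>i<l. varp M p f (B i) powr p) powr (1 / p)"

definition Varpk_on :: "'a measure \<Rightarrow> real \<Rightarrow> nat \<Rightarrow> ('a \<Rightarrow> real) \<Rightarrow> 'a set \<Rightarrow> real" where
  "Varpk_on M p k f A = Inf {varp_fam M p f l B | l B. l \<le> k \<and> (\<forall>i<l. B i \<in> sets M) \<and>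
       disjoint_family_on B {..<l} \<and> (\<Union>i<l. B i) = A}"

definition Varpk :: "'a measure \<Rightarrow> real \<Rightarrow> nat \<Rightarrow> ('a \<Rightarrow> real) \<Rightarrow> real" where
  "Varpk M p k f = Sup {Varpk_on M p k f A | A. A \<in> sets M \<and> emeasure M A < \<infinity>}"

definition is_atom :: "'a measure \<Rightarrow> 'a set \<Rightarrow> bool" where
  "is_atom M A \<longleftrightarrow> A \<in> sets M \<and> emeasure M A > 0 \<and>
     (\<forall>B\<in>sets M. B \<subseteq> A \<longrightarrow> emeasure M B < emeasure M A \<longrightarrow> emeasure M B = 0)"

end

theory Submission
  imports Defs
begin


lemma powr_superadd:
  fixes a b p :: real
  assumes "0 \<le> a" "0 \<le> b" "1 \<le> p"
  shows "a powr p + b powr p \<le> (a + b) powr p"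
proof (cases "a + b = 0")
  case True then have "a = 0" "b = 0" using assms by auto
  then show ?thesis by simp
next
  case False
  then have ab: "0 < a + b" using assms by auto
  have e: "x powr p = x * x powr (p - 1)" if "0 \<le> x" for x :: real
  proof (cases "x = 0")
    case True then show ?thesis using assms by simp
  next
    case False
    then have "x powr (1 + (p - 1)) = x powr 1 * x powr (p - 1)" by (simp only: powr_add)
    then show ?thesis using that by simp
  qed
  have "a * a powr (p - 1) \<le> a * (a + b) powr (p - 1)"
    using assms by (intro mult_left_mono powr_mono2) auto
  moreover have "b * b powr (p - 1) \<le> b * (a + b) powr (p - 1)"
    using assms by (intro mult_left_mono powr_mono2) auto
  ultimately show ?thesis using e[of a] e[of b] e[of "a+b"] assms
    by (simp add: distrib_right)
qed

lemma powr_subadd_root: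
  fixes x y p :: real
  assumes "0 \<le> x" "0 \<le> y" "1 \<le> p"
  shows "(x + y) powr (1/p) \<le> x powr (1/p) + y powr (1/p)"
proof -
  have "x + y = (x powr (1/p)) powr p + (y powr (1/p)) powr p"
    using assms by (simp add: powr_powr)
  also have "\<dots> \<le> (x powr (1/p) + y powr (1/p)) powr p"
    using assms by (intro powr_superadd) auto
  finally have "(x + y) powr (1/p) \<le> ((x powr (1/p) + y powr (1/p)) powr p) powr (1/p)"
    using assms by (intro powr_mono2) auto
  also have "\<dots> = x powr (1/p) + y powr (1/p)" using assms by (simp add: powr_powr)
  finally show ?thesis .
qed

lemma powr_midconvex:
  fixes a b p :: real
  assumes "0 \<le> a" "0 \<le> b" "1 \<le> p"
  shows "((a + b) / 2) powr p \<le> (a powr p + b powr p) / 2"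
proof (cases "a = 0 \<or> b = 0")
  case True
  have h: "(c / 2) powr p \<le> c powr p / 2" if "0 \<le> c" for c :: real
  proof -
    have "(c/2) powr p = c powr p / 2 powr p" using that by (simp add: powr_divide)
    moreover have "2 \<le> (2::real) powr p"
      using powr_mono[of 1 p 2] assms by simp
    moreover have "0 \<le> c powr p" by simp
    moreover have "c powr p / 2 powr p \<le> c powr p / 2"
      using \<open>2 \<le> 2 powr p\<close> by (intro divide_left_mono) auto
    ultimately show ?thesis by simp
  qed
  show ?thesis using True h[of a] h[of b] assms by auto
next
  case False
  then have "0 < a" "0 < b" using assms by auto
  have "convex_on {0<..} (\<lambda>x::real. x powr p)" using powr_convex assms by simp
  from convex_onD[OF this, of "1/2" a b] \<open>0 < a\<close> \<open>0 < b\<close>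
  show ?thesis by (simp add: add_divide_distrib)
qed

lemma powr_abs_add_le:
  fixes u v p :: real
  assumes "1 \<le> p"
  shows "\<bar>u + v\<bar> powr p \<le> 2 powr (p - 1) * (\<bar>u\<bar> powr p + \<bar>v\<bar> powr p)"
proof -
  have "\<bar>u + v\<bar> powr p \<le> (\<bar>u\<bar> + \<bar>v\<bar>) powr p"
    using assms by (intro powr_mono2) auto
  also have "\<dots> = (2 * ((\<bar>u\<bar> + \<bar>v\<bar>) / 2)) powr p"
    by (rule arg_cong[where f="\<lambda>x. x powr p"]) simp
  also have "\<dots> = 2 powr p * ((\<bar>u\<bar> + \<bar>v\<bar>) / 2) powr p"
    by (subst powr_mult) auto
  also have "\<dots> \<le> 2 powr p * ((\<bar>u\<bar> powr p + \<bar>v\<bar> powr p) / 2)"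
    using assms by (intro mult_left_mono powr_midconvex) auto
  also have "\<dots> = 2 powr (p - 1) * (\<bar>u\<bar> powr p + \<bar>v\<bar> powr p)"
    by (simp add: powr_diff)
  finally show ?thesis .
qed


lemma sum_indicator_single:
  fixes g :: "nat \<Rightarrow> 'b::comm_semiring_1"
  assumes "disjoint_family_on B {..<l}" "j < l" "x \<in> B j"
  shows "(\<Sum>i<l. g i * indicator (B i) x) = g j"
proof -
  have "(\<Sum>i<l. g i * indicator (B i) x) = g j * indicator (B j) x + (\<Sum>i\<in>{..<l} - {j}. g i * indicator (B i) x)"
    using assms by (subst sum.remove[of _ j]) auto
  also have "(\<Sum>i\<in>{..<l} - {j}. g i * indicator (B i) x) = 0"
  proof (rule sum.neutral, intro ballI)
    fix i assume "i \<in> {..<l} - {j}"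
    then have "x \<notin> B i" using assms unfolding disjoint_family_on_def by blast
    then show "g i * indicator (B i) x = 0" by simp
  qed
  finally show ?thesis using assms by simp
qed

lemma sum_indicator_none:
  fixes g :: "nat \<Rightarrow> 'b::comm_semiring_1"
  assumes "x \<notin> (\<Union>i<l. B i)"
  shows "(\<Sum>i<l. g i * indicator (B i) x) = 0"
proof (rule sum.neutral)
  show "\<forall>i\<in>{..<l}. g i * indicator (B i) x = 0" using assms by auto
qed

lemma fun_sum_indicator:
  fixes g :: "nat \<Rightarrow> 'b::comm_semiring_1" and F :: "'b \<Rightarrow> 'c::comm_semiring_1"
  assumes "disjoint_family_on B {..<l}" "F 0 = 0"
  shows "F (\<Sum>i<l. g i * indicator (B i) x) = (\<Sum>i<l. F (g i) * indicator (B i) x)"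
proof (cases "\<exists>j<l. x \<in> B j")
  case True
  then obtain j where "j < l" "x \<in> B j" by auto
  then show ?thesis using sum_indicator_single[OF assms(1) \<open>j < l\<close> \<open>x \<in> B j\<close>, of g]
      sum_indicator_single[OF assms(1) \<open>j < l\<close> \<open>x \<in> B j\<close>, of "\<lambda>i. F (g i)"]
    by (simp only:)
next
  case False
  then show ?thesis using sum_indicator_none[where x=x and l=l and B=B] assms by auto
qed

definition ispart :: "'a measure \<Rightarrow> 'a set \<Rightarrow> nat \<Rightarrow> (nat \<Rightarrow> 'a set) \<Rightarrow> bool" where
  "ispart M A l B \<longleftrightarrow> (\<forall>i<l. B i \<in> sets M) \<and> disjoint_family_on B {..<l} \<and> (\<Union>i<l. B i) = A"

definition hstep :: "(nat \<Rightarrow> real) \<Rightarrow> (nat \<Rightarrow> 'a set) \<Rightarrow> nat \<Rightarrow> 'a \<Rightarrow> real" where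
  "hstep m B l = (\<lambda>x. \<Sum>i<l. m i * indicator (B i) x)"


lemma ispart_sub: "ispart M A l B \<Longrightarrow> i < l \<Longrightarrow> B i \<subseteq> A"
  unfolding ispart_def by auto

lemma ispart_fin: "ispart M A l B \<Longrightarrow> emeasure M A < \<infinity> \<Longrightarrow> A \<in> sets M \<Longrightarrow> i < l \<Longrightarrow> emeasure M (B i) < \<infinity>"
  by (meson emeasure_mono ispart_def ispart_sub order.strict_trans1)

lemma GpkI:
  assumes "memLp M p h" "l \<le> k" "\<forall>i<l. A i \<in> sets M" "disjoint_family_on A {..<l}"
    "(\<Union>i<l. A i) = space M" "h = (\<lambda>x. \<Sum>i<l. a i * indicator (A i) x)"
  shows "h \<in> Gpk M p k"
  unfolding Gpk_def mem_Collect_eq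
  by (rule conjI[OF assms(1)], rule exI[of _ l], rule exI[of _ A], rule exI[of _ a]) (use assms in simp)

lemma GpkE:
  assumes "h \<in> Gpk M p k"
  obtains l A a where "memLp M p h" "l \<le> k" "\<forall>i<l. A i \<in> sets M" "disjoint_family_on A {..<l}"
    "(\<Union>i<l. A i) = space M" "h = (\<lambda>x. \<Sum>i<l. a i * indicator (A i) x)"
  using assms unfolding Gpk_def by blast

lemma Gpk_mono: "k \<le> k' \<Longrightarrow> Gpk M p k \<subseteq> Gpk M p k'"
proof
  fix h assume "k \<le> k'" "h \<in> Gpk M p k"
  then show "h \<in> Gpk M p k'"
    by (elim GpkE) (rule GpkI, assumption, simp_all)
qed

lemma hstep_memLp:
  assumes "ispart M A l B" "emeasure M A < \<infinity>" "A \<in> sets M" "0 < p"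
  shows "memLp M p (hstep m B l)"
proof -
  have Bs: "\<And>i. i < l \<Longrightarrow> B i \<in> sets M" and dj: "disjoint_family_on B {..<l}"
    using assms(1) unfolding ispart_def by auto
  have fin: "\<And>i. i < l \<Longrightarrow> emeasure M (B i) < \<infinity>" using ispart_fin[OF assms(1-3)] .
  have meas: "hstep m B l \<in> borel_measurable M"
    unfolding hstep_def using Bs
    by (intro borel_measurable_sum borel_measurable_times borel_measurable_const borel_measurable_indicator) auto
  have eq: "\<bar>hstep m B l x\<bar> powr p = (\<Sum>i<l. (\<bar>m i\<bar> powr p) * indicator (B i) x)" for x
    unfolding hstep_def
    using fun_sum_indicator[OF dj, of "\<lambda>t. \<bar>t\<bar> powr p" m x] by simp
  have "integrable M (\<lambda>x. \<Sum>i<l. (\<bar>m i\<bar> powr p) * indicator (B i) x)"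
    by (rule Bochner_Integration.integrable_sum) (use Bs fin in simp)
  then show ?thesis unfolding memLp_def eq using meas by auto
qed

lemma hstep_Gpk_Suc:
  assumes "ispart M A l B" "emeasure M A < \<infinity>" "A \<in> sets M" "0 < p"
  shows "hstep m B l \<in> Gpk M p (Suc l)"
proof -
  have Bs: "\<And>i. i < l \<Longrightarrow> B i \<in> sets M" and dj: "disjoint_family_on B {..<l}" and U: "(\<Union>i<l. B i) = A"
    using assms(1) unfolding ispart_def by auto
  have As: "A \<subseteq> space M" using assms(3) sets.sets_into_space by auto
  define A' where "A' i = (if i < l then B i else space M - A)" for i
  define a' where "a' i = (if i < l then m i else 0)" for i
  have s: "\<forall>i<Suc l. A' i \<in> sets M" using Bs assms(3) by (auto simp: A'_def)
  have d: "disjoint_family_on A' {..<Suc l}"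
    unfolding disjoint_family_on_def
  proof (intro ballI impI)
    fix i i' assume i: "i \<in> {..<Suc l}" "i' \<in> {..<Suc l}" "i \<noteq> i'"
    show "A' i \<inter> A' i' = {}"
    proof (cases "i < l \<and> i' < l")
      case True then show ?thesis using dj i unfolding A'_def disjoint_family_on_def by auto
    next
      case False
      then have "(i = l \<and> i' < l) \<or> (i' = l \<and> i < l)" using i by auto
      then show ?thesis using ispart_sub[OF assms(1)] unfolding A'_def by auto
    qed
  qed
  have u: "(\<Union>i<Suc l. A' i) = space M"
    using U As by (auto simp: A'_def lessThan_Suc)
  have h: "hstep m B l = (\<lambda>x. \<Sum>i<Suc l. a' i * indicator (A' i) x)"
    unfolding hstep_def by (auto simp: A'_def a'_def intro!: sum.cong)
  show ?thesis by (rule GpkI[OF hstep_memLp[OF assms] _ s d u h]) simp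
qed

lemma hstep_Gpk_space:
  assumes "ispart M (space M) l B" "emeasure M (space M) < \<infinity>" "0 < p"
  shows "hstep m B l \<in> Gpk M p l"
proof -
  have s: "\<forall>i<l. B i \<in> sets M" and d: "disjoint_family_on B {..<l}" and u: "(\<Union>i<l. B i) = space M"
    using assms(1) unfolding ispart_def by auto
  have h: "hstep m B l = (\<lambda>x. \<Sum>i<l. m i * indicator (B i) x)" unfolding hstep_def ..
  show ?thesis by (rule GpkI[OF hstep_memLp[OF assms(1,2) sets.top assms(3)] _ s d u h]) simp
qed

lemma hstep_Gpk_zero:
  assumes "ispart M A l B" "emeasure M A < \<infinity>" "A \<in> sets M" "0 < p" "j < l" "m j = 0"
  shows "hstep m B l \<in> Gpk M p l"
proof -
  have Bs: "\<And>i. i < l \<Longrightarrow> B i \<in> sets M" and dj: "disjoint_family_on B {..<l}" and U: "(\<Union>i<l. B i) = A"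
    using assms(1) unfolding ispart_def by auto
  have As: "A \<subseteq> space M" using assms(3) sets.sets_into_space by auto
  define A' where "A' i = (if i = j then B j \<union> (space M - A) else B i)" for i
  have s: "\<forall>i<l. A' i \<in> sets M" using Bs assms(3,5) by (auto simp: A'_def)
  have d: "disjoint_family_on A' {..<l}"
    unfolding disjoint_family_on_def
  proof (intro ballI impI)
    fix i i' assume i: "i \<in> {..<l}" "i' \<in> {..<l}" "i \<noteq> i'"
    have "B i \<inter> B i' = {}" using dj i unfolding disjoint_family_on_def by auto
    moreover have "B i \<subseteq> A" "B i' \<subseteq> A" using ispart_sub[OF assms(1)] i by auto
    ultimately show "A' i \<inter> A' i' = {}" using i unfolding A'_def by auto
  qed
  have u: "(\<Union>i<l. A' i) = space M"
    using U As assms(5) by (auto simp: A'_def split: if_splits)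
  have h: "hstep m B l = (\<lambda>x. \<Sum>i<l. m i * indicator (A' i) x)"
    unfolding hstep_def using assms(6) by (intro ext sum.cong refl) (auto simp: A'_def)
  show ?thesis by (rule GpkI[OF hstep_memLp[OF assms(1-4)] _ s d u h]) simp
qed



locale Lp_setting =
  fixes M :: "'a measure" and p :: real and f :: "'a \<Rightarrow> real"
  assumes p: "1 \<le> p" and f: "memLp M p f"
begin

lemma f_meas[measurable]: "f \<in> borel_measurable M"
  using f unfolding memLp_def by auto

lemma Nf_fin: "(\<integral>\<^sup>+ x. ennreal (\<bar>f x\<bar> powr p) \<partial>M) < \<infinity>"
  using f unfolding memLp_def by (auto dest!: integrableD(2) simp: top.not_eq_extremum)

definition V :: "'a set \<Rightarrow> ennreal" where
  "V B = (\<integral>\<^sup>+ x. (\<integral>\<^sup>+ y. ennreal (\<bar>f x - f y\<bar> powr p) * indicator B y \<partial>M) * indicator B x \<partial>M)"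

lemma V_eq: "(\<integral>\<^sup>+ x\<in>B. (\<integral>\<^sup>+ y\<in>B. ennreal (\<bar>f x - f y\<bar> powr p) \<partial>M) \<partial>M) = V B"
  unfolding V_def by simp

lemma V_bound:
  assumes B: "B \<in> sets M"
  shows "V B \<le> ennreal (2 powr p) * emeasure M B * (\<integral>\<^sup>+ x. ennreal (\<bar>f x - a\<bar> powr p) * indicator B x \<partial>M)"
proof -
  let ?c = "ennreal (2 powr (p - 1))"
  let ?I = "\<integral>\<^sup>+ x. ennreal (\<bar>f x - a\<bar> powr p) * indicator B x \<partial>M"
  have pw: "ennreal (\<bar>f x - f y\<bar> powr p) \<le> ?c * (ennreal (\<bar>f x - a\<bar> powr p) + ennreal (\<bar>f y - a\<bar> powr p))" for x y
  proof -
    have "\<bar>f x - f y\<bar> powr p = \<bar>(f x - a) + (a - f y)\<bar> powr p" by simp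
    also have "\<dots> \<le> 2 powr (p - 1) * (\<bar>f x - a\<bar> powr p + \<bar>a - f y\<bar> powr p)"
      by (rule powr_abs_add_le[OF p])
    also have "\<bar>a - f y\<bar> = \<bar>f y - a\<bar>" by simp
    finally have "ennreal (\<bar>f x - f y\<bar> powr p) \<le> ennreal (2 powr (p - 1) * (\<bar>f x - a\<bar> powr p + \<bar>f y - a\<bar> powr p))"
      by (rule ennreal_leI)
    also have "\<dots> = ?c * (ennreal (\<bar>f x - a\<bar> powr p) + ennreal (\<bar>f y - a\<bar> powr p))"
      by (simp add: ennreal_mult ennreal_plus)
    finally show ?thesis .
  qed
  have inner: "(\<integral>\<^sup>+ y. ?c * (ennreal (\<bar>f x - a\<bar> powr p) + ennreal (\<bar>f y - a\<bar> powr p)) * indicator B y \<partial>M)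
      = ?c * ennreal (\<bar>f x - a\<bar> powr p) * emeasure M B + ?c * ?I" for x
  proof -
    have "(\<integral>\<^sup>+ y. ?c * (ennreal (\<bar>f x - a\<bar> powr p) + ennreal (\<bar>f y - a\<bar> powr p)) * indicator B y \<partial>M)
      = (\<integral>\<^sup>+ y. ?c * ennreal (\<bar>f x - a\<bar> powr p) * indicator B y + ?c * (ennreal (\<bar>f y - a\<bar> powr p) * indicator B y) \<partial>M)"
      by (intro nn_integral_cong) (simp add: algebra_simps)
    also have "\<dots> = ?c * ennreal (\<bar>f x - a\<bar> powr p) * emeasure M B + ?c * ?I"
      using B by (subst nn_integral_add) (auto simp: nn_integral_cmult nn_integral_cmult_indicator)
    finally show ?thesis .
  qed
  have "V B \<le> (\<integral>\<^sup>+ x. (\<integral>\<^sup>+ y. ?c * (ennreal (\<bar>f x - a\<bar> powr p) + ennreal (\<bar>f y - a\<bar> powr p)) * indicator B y \<partial>M) * indicator B x \<partial>M)"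
    unfolding V_def
    by (intro nn_integral_mono mult_right_mono) (auto intro!: pw)
  also have "\<dots> = (\<integral>\<^sup>+ x. (?c * emeasure M B) * (ennreal (\<bar>f x - a\<bar> powr p) * indicator B x) + (?c * ?I) * indicator B x \<partial>M)"
    unfolding inner by (intro nn_integral_cong) (simp add: algebra_simps)
  also have "\<dots> = ?c * emeasure M B * ?I + ?c * ?I * emeasure M B"
    using B by (subst nn_integral_add) (auto simp: nn_integral_cmult nn_integral_cmult_indicator)
  also have "\<dots> = ?c * emeasure M B * ?I + ?c * emeasure M B * ?I" by (simp add: mult_ac)
  also have "\<dots> = (?c * 2) * emeasure M B * ?I" by (simp only: mult_2[symmetric] mult_ac)
  also have "?c * 2 = ennreal (2 powr p)"
  proof -
    have "?c * 2 = ennreal (2 powr (p - 1) * 2)" by (simp add: ennreal_mult'')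
    also have "2 powr (p - 1) * 2 = (2::real) powr p" by (simp add: powr_diff)
    finally show ?thesis .
  qed
  finally show ?thesis .
qed

lemma G_meas:
  assumes B: "B \<in> sets M" "emeasure M B < \<infinity>"
  shows "(\<lambda>x. \<integral>\<^sup>+ y. ennreal (\<bar>f x - f y\<bar> powr p) * indicator B y \<partial>M) \<in> borel_measurable M"
proof -
  have Bs: "B \<subseteq> space M" using B sets.sets_into_space by auto
  have "finite_measure (restrict_space M B)"
    using B Bs by (intro finite_measureI) (auto simp: space_restrict_space emeasure_restrict_space Int_absorb2)
  then interpret R: finite_measure "restrict_space M B" .
  have eq: "(\<integral>\<^sup>+ y. ennreal (\<bar>f x - f y\<bar> powr p) * indicator B y \<partial>M)
      = (\<integral>\<^sup>+ y. ennreal (\<bar>f x - f y\<bar> powr p) \<partial>restrict_space M B)" for x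
    using B Bs by (subst nn_integral_restrict_space) (auto simp: Int_absorb2)
  have fr[measurable]: "f \<in> borel_measurable (restrict_space M B)"
    by (rule measurable_restrict_space1) simp
  have "(\<lambda>x. \<integral>\<^sup>+ y. ennreal (\<bar>f x - f y\<bar> powr p) \<partial>restrict_space M B) \<in> borel_measurable M"
    by measurable
  then show ?thesis unfolding eq .
qed

lemma V_fin:
  assumes B: "B \<in> sets M" "emeasure M B < \<infinity>"
  shows "V B < \<infinity>"
proof -
  have "(\<integral>\<^sup>+ x. ennreal (\<bar>f x - 0\<bar> powr p) * indicator B x \<partial>M) \<le> (\<integral>\<^sup>+ x. ennreal (\<bar>f x\<bar> powr p) \<partial>M)"
    by (intro nn_integral_mono) (auto simp: indicator_def)
  then have I: "(\<integral>\<^sup>+ x. ennreal (\<bar>f x - 0\<bar> powr p) * indicator B x \<partial>M) < \<infinity>"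
    using Nf_fin by (meson order.strict_trans1)
  have "V B \<le> ennreal (2 powr p) * emeasure M B * (\<integral>\<^sup>+ x. ennreal (\<bar>f x - 0\<bar> powr p) * indicator B x \<partial>M)"
    by (rule V_bound[OF B(1)])
  also have "\<dots> < \<infinity>" using I B by (simp add: ennreal_mult_less_top)
  finally show ?thesis .
qed

lemma varp_pow:
  assumes B: "B \<in> sets M" "emeasure M B < \<infinity>"
  shows "varp M p f B powr p = (if emeasure M B > 0 then enn2real (V B) / measure M B else 0)"
proof (cases "emeasure M B > 0")
  case True
  have "0 \<le> enn2real (V B) / measure M B" by simp
  then show ?thesis using True p unfolding varp_def V_eq by (simp add: powr_powr)
next
  case False
  then show ?thesis using p unfolding varp_def by simp
qed

lemma varp_nonneg: "0 \<le> varp M p f B"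
  unfolding varp_def by simp

lemma point_lemma:
  assumes B: "B \<in> sets M" "emeasure M B < \<infinity>"
  shows "\<exists>c. (\<integral>\<^sup>+ x. ennreal (\<bar>f x - c\<bar> powr p) * indicator B x \<partial>M) \<le> ennreal (varp M p f B powr p)"
proof (cases "emeasure M B > 0")
  case False
  then have "B \<in> null_sets M" using B by (auto simp: null_sets_def)
  then show ?thesis by (auto simp: nn_integral_null_set)
next
  case True
  define G where "G x = (\<integral>\<^sup>+ y. ennreal (\<bar>f x - f y\<bar> powr p) * indicator B y \<partial>M)" for x
  have Gm[measurable]: "G \<in> borel_measurable M" unfolding G_def by (rule G_meas[OF B])
  define c where "c = enn2real (V B) / measure M B"
  have c0: "0 \<le> c" unfolding c_def by simp
  have mB: "emeasure M B = ennreal (measure M B)" using B by (simp add: emeasure_eq_ennreal_measure)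
  have mpos: "measure M B > 0" using True mB by (simp add: ennreal_less_iff)
  have VB: "V B = ennreal (enn2real (V B))" using V_fin[OF B] by simp
  have cV: "ennreal c * emeasure M B = V B"
  proof -
    have "ennreal c * emeasure M B = ennreal (c * measure M B)" using mB c0 by (simp add: ennreal_mult)
    also have "c * measure M B = enn2real (V B)" unfolding c_def using mpos by simp
    finally show ?thesis using VB by simp
  qed
  have "\<exists>y\<in>B. G y \<le> ennreal c"
  proof (rule ccontr)
    assume "\<not> (\<exists>y\<in>B. G y \<le> ennreal c)"
    then have gt: "\<And>y. y \<in> B \<Longrightarrow> ennreal c < G y" by (auto simp: not_le)
    have "(\<integral>\<^sup>+ y. ennreal c * indicator B y \<partial>M) < (\<integral>\<^sup>+ y. G y * indicator B y \<partial>M)"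
    proof (rule nn_integral_less)
      show "(\<integral>\<^sup>+ y. ennreal c * indicator B y \<partial>M) \<noteq> \<infinity>"
        using B by (simp add: nn_integral_cmult_indicator ennreal_mult_eq_top_iff)
      show "AE x in M. ennreal c * indicator B x \<le> G x * indicator B x"
        using gt by (auto simp: indicator_def intro!: less_imp_le)
      show "\<not> (AE x in M. G x * indicator B x \<le> ennreal c * indicator B x)"
      proof
        assume "AE x in M. G x * indicator B x \<le> ennreal c * indicator B x"
        then have "AE x in M. x \<notin> B"
          by eventually_elim (use gt in \<open>force simp: indicator_def not_le\<close>)
        then have "emeasure M B = 0"
          using B by (subst (asm) AE_iff_measurable[of B]) (auto dest: sets.sets_into_space)
        then show False using True by simp
      qed
    qed (use B in auto)
    also have "(\<integral>\<^sup>+ y. G y * indicator B y \<partial>M) = V B" unfolding G_def V_def ..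
    finally show False using cV B by (simp add: nn_integral_cmult_indicator)
  qed
  then obtain y where y: "y \<in> B" "G y \<le> ennreal c" by auto
  have "(\<integral>\<^sup>+ x. ennreal (\<bar>f x - f y\<bar> powr p) * indicator B x \<partial>M) = G y"
    unfolding G_def by (intro nn_integral_cong) (simp add: abs_minus_commute)
  also have "\<dots> \<le> ennreal c" by (rule y)
  also have "c = varp M p f B powr p" using varp_pow[OF B] True c_def by simp
  finally show ?thesis by blast
qed

end



lemma memLp_fin: "memLp M p g \<Longrightarrow> (\<integral>\<^sup>+ x. ennreal (\<bar>g x\<bar> powr p) \<partial>M) < \<infinity>"
  unfolding memLp_def by (auto dest!: integrableD(2) simp: top.not_eq_extremum)

lemma varp_fam_nonneg: "0 \<le> varp_fam M p f l B"
  unfolding varp_fam_def by simp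

lemma Varpk_on_set_bdd: "bdd_below {varp_fam M p f l B | l B. l \<le> k \<and> (\<forall>i<l. B i \<in> sets M) \<and>
       disjoint_family_on B {..<l} \<and> (\<Union>i<l. B i) = A}"
  by (rule bdd_belowI[of _ 0]) (auto simp: varp_fam_nonneg)

lemma Varpk_on_le_fam:
  assumes "ispart M A l B" "l \<le> k"
  shows "Varpk_on M p k f A \<le> varp_fam M p f l B"
  unfolding Varpk_on_def
proof (rule cInf_lower[OF _ Varpk_on_set_bdd])
  show "varp_fam M p f l B \<in> {varp_fam M p f l B | l B. l \<le> k \<and> (\<forall>i<l. B i \<in> sets M) \<and>
       disjoint_family_on B {..<l} \<and> (\<Union>i<l. B i) = A}"
    using assms unfolding ispart_def by blast
qed

lemma Varpk_on_nonneg: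
  assumes "1 \<le> k" "A \<in> sets M"
  shows "0 \<le> Varpk_on M p k f A"
  unfolding Varpk_on_def
proof (rule cInf_greatest)
  show "{varp_fam M p f l B | l B. l \<le> k \<and> (\<forall>i<l. B i \<in> sets M) \<and>
       disjoint_family_on B {..<l} \<and> (\<Union>i<l. B i) = A} \<noteq> {}"
  proof -
    have "varp_fam M p f 1 (\<lambda>_. A) \<in> {varp_fam M p f l B | l B. l \<le> k \<and> (\<forall>i<l. B i \<in> sets M) \<and>
       disjoint_family_on B {..<l} \<and> (\<Union>i<l. B i) = A}"
      using assms by (intro CollectI exI[of _ 1] exI[of _ "\<lambda>_. A"]) (auto simp: disjoint_family_on_def)
    then show ?thesis by blast
  qed
qed (auto simp: varp_fam_nonneg)

context Lp_setting
begin

lemma diff_fin: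
  assumes "memLp M p g"
  shows "(\<integral>\<^sup>+ x. ennreal (\<bar>f x - g x\<bar> powr p) \<partial>M) < \<infinity>"
proof -
  let ?c = "ennreal (2 powr (p - 1))"
  have "(\<integral>\<^sup>+ x. ennreal (\<bar>f x - g x\<bar> powr p) \<partial>M)
      \<le> (\<integral>\<^sup>+ x. ?c * ennreal (\<bar>f x\<bar> powr p) + ?c * ennreal (\<bar>g x\<bar> powr p) \<partial>M)"
  proof (rule nn_integral_mono)
    fix x
    have "\<bar>f x + - g x\<bar> powr p \<le> 2 powr (p - 1) * (\<bar>f x\<bar> powr p + \<bar>- g x\<bar> powr p)"
      by (rule powr_abs_add_le[OF p])
    then have "ennreal (\<bar>f x - g x\<bar> powr p) \<le> ennreal (2 powr (p - 1) * (\<bar>f x\<bar> powr p + \<bar>g x\<bar> powr p))"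
      by (intro ennreal_leI) simp
    also have "\<dots> = ?c * ennreal (\<bar>f x\<bar> powr p) + ?c * ennreal (\<bar>g x\<bar> powr p)"
      by (simp add: ennreal_mult ennreal_plus distrib_left)
    finally show "ennreal (\<bar>f x - g x\<bar> powr p) \<le> ?c * ennreal (\<bar>f x\<bar> powr p) + ?c * ennreal (\<bar>g x\<bar> powr p)" .
  qed
  also have "\<dots> = ?c * (\<integral>\<^sup>+ x. ennreal (\<bar>f x\<bar> powr p) \<partial>M) + ?c * (\<integral>\<^sup>+ x. ennreal (\<bar>g x\<bar> powr p) \<partial>M)"
  proof -
    have gm[measurable]: "g \<in> borel_measurable M" using assms unfolding memLp_def by auto
    have m1: "(\<lambda>x. ennreal (\<bar>f x\<bar> powr p)) \<in> borel_measurable M" by measurable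
    have m2: "(\<lambda>x. ennreal (\<bar>g x\<bar> powr p)) \<in> borel_measurable M" by measurable
    have m3: "(\<lambda>x. ?c * ennreal (\<bar>f x\<bar> powr p)) \<in> borel_measurable M" by measurable
    have m4: "(\<lambda>x. ?c * ennreal (\<bar>g x\<bar> powr p)) \<in> borel_measurable M" by measurable
    show ?thesis by (simp only: nn_integral_add[OF m3 m4] nn_integral_cmult[OF m1] nn_integral_cmult[OF m2])
  qed
  also have "\<dots> < \<infinity>"
    using Nf_fin memLp_fin[OF assms] by (simp add: ennreal_mult_less_top)
  finally show ?thesis .
qed

lemma err_eq:
  assumes B: "ispart M A l B" and A: "A \<in> sets M"
  shows "(\<integral>\<^sup>+ x. ennreal (\<bar>f x - hstep m B l x\<bar> powr p) \<partial>M)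
    = (\<Sum>i<l. \<integral>\<^sup>+ x. ennreal (\<bar>f x - m i\<bar> powr p) * indicator (B i) x \<partial>M)
      + (\<integral>\<^sup>+ x. ennreal (\<bar>f x\<bar> powr p) * indicator (space M - A) x \<partial>M)"
proof -
  have Bs: "\<And>i. i < l \<Longrightarrow> B i \<in> sets M" and dj: "disjoint_family_on B {..<l}" and U: "(\<Union>i<l. B i) = A"
    using B unfolding ispart_def by auto
  have pw: "ennreal (\<bar>f x - hstep m B l x\<bar> powr p)
      = (\<Sum>i<l. ennreal (\<bar>f x - m i\<bar> powr p) * indicator (B i) x) + ennreal (\<bar>f x\<bar> powr p) * indicator (space M - A) x"
    if x: "x \<in> space M" for x
  proof (cases "\<exists>j<l. x \<in> B j")
    case True
    then obtain j where j: "j < l" "x \<in> B j" by auto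
    have "hstep m B l x = m j" unfolding hstep_def by (rule sum_indicator_single[OF dj j])
    moreover have "(\<Sum>i<l. ennreal (\<bar>f x - m i\<bar> powr p) * indicator (B i) x) = ennreal (\<bar>f x - m j\<bar> powr p)"
      by (rule sum_indicator_single[OF dj j])
    moreover have "x \<in> A" using U j by auto
    ultimately show ?thesis by simp
  next
    case False
    then have nx: "x \<notin> (\<Union>i<l. B i)" by auto
    have "hstep m B l x = 0" unfolding hstep_def by (rule sum_indicator_none[OF nx])
    moreover have "(\<Sum>i<l. ennreal (\<bar>f x - m i\<bar> powr p) * indicator (B i) x) = 0"
      by (rule sum_indicator_none[OF nx])
    moreover have "x \<notin> A" using U nx by auto
    ultimately show ?thesis using x by simp
  qed
  have mi: "(\<lambda>x. ennreal (\<bar>f x - m i\<bar> powr p) * indicator (B i) x) \<in> borel_measurable M" if "i < l" for i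
    using Bs[OF that] by measurable
  have "(\<integral>\<^sup>+ x. ennreal (\<bar>f x - hstep m B l x\<bar> powr p) \<partial>M)
    = (\<integral>\<^sup>+ x. (\<Sum>i<l. ennreal (\<bar>f x - m i\<bar> powr p) * indicator (B i) x) + ennreal (\<bar>f x\<bar> powr p) * indicator (space M - A) x \<partial>M)"
    by (intro nn_integral_cong pw)
  also have "\<dots> = (\<integral>\<^sup>+ x. (\<Sum>i<l. ennreal (\<bar>f x - m i\<bar> powr p) * indicator (B i) x) \<partial>M)
      + (\<integral>\<^sup>+ x. ennreal (\<bar>f x\<bar> powr p) * indicator (space M - A) x \<partial>M)"
  proof (rule nn_integral_add)
    show "(\<lambda>x. \<Sum>i<l. ennreal (\<bar>f x - m i\<bar> powr p) * indicator (B i) x) \<in> borel_measurable M"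
      by (rule borel_measurable_sum) (rule mi, simp)
    show "(\<lambda>x. ennreal (\<bar>f x\<bar> powr p) * indicator (space M - A) x) \<in> borel_measurable M"
      using A by measurable
  qed
  also have "(\<integral>\<^sup>+ x. (\<Sum>i<l. ennreal (\<bar>f x - m i\<bar> powr p) * indicator (B i) x) \<partial>M)
      = (\<Sum>i<l. \<integral>\<^sup>+ x. ennreal (\<bar>f x - m i\<bar> powr p) * indicator (B i) x \<partial>M)"
    by (rule nn_integral_sum) (rule mi, simp)
  finally show ?thesis .
qed

lemma piece_bound:
  assumes Bs: "B \<in> sets M" "emeasure M B < \<infinity>"
    and I: "(\<integral>\<^sup>+ x. ennreal (\<bar>f x - a\<bar> powr p) * indicator B x \<partial>M) < \<infinity>"
  shows "varp M p f B powr p \<le> 2 powr p * enn2real (\<integral>\<^sup>+ x. ennreal (\<bar>f x - a\<bar> powr p) * indicator B x \<partial>M)"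
proof (cases "emeasure M B > 0")
  case False
  then show ?thesis using varp_pow[OF Bs] by simp
next
  case True
  let ?I = "\<integral>\<^sup>+ x. ennreal (\<bar>f x - a\<bar> powr p) * indicator B x \<partial>M"
  have mB: "emeasure M B = ennreal (measure M B)" using Bs by (simp add: emeasure_eq_ennreal_measure)
  have mpos: "measure M B > 0" using True mB by (simp add: ennreal_less_iff)
  have Ie: "?I = ennreal (enn2real ?I)" using I by simp
  have "V B \<le> ennreal (2 powr p) * emeasure M B * ?I" by (rule V_bound[OF Bs(1)])
  also have "\<dots> = ennreal (2 powr p * measure M B * enn2real ?I)"
    by (subst Ie, subst mB) (simp add: ennreal_mult)
  finally have "enn2real (V B) \<le> 2 powr p * measure M B * enn2real ?I"
    by (metis enn2real_ennreal enn2real_mono ennreal_less_top mult_nonneg_nonneg enn2real_nonneg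
        measure_nonneg powr_ge_zero)
  then have "enn2real (V B) / measure M B \<le> 2 powr p * enn2real ?I"
    using mpos by (simp add: divide_le_eq mult_ac)
  then show ?thesis using varp_pow[OF Bs] True by simp
qed

lemma Varpk_on_le_Lp:
  assumes A: "A \<in> sets M" "emeasure M A < \<infinity>" and h: "h \<in> Gpk M p k"
  shows "Varpk_on M p k f A \<le> 2 * Lp_dist M p f h"
proof -
  obtain l Ah a where hm: "memLp M p h" and lk: "l \<le> k" and Ahs: "\<forall>i<l. Ah i \<in> sets M"
    and dj: "disjoint_family_on Ah {..<l}" and U: "(\<Union>i<l. Ah i) = space M"
    and heq: "h = (\<lambda>x. \<Sum>i<l. a i * indicator (Ah i) x)"
    using h by (rule GpkE)
  define B where "B i = A \<inter> Ah i" for i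
  have As: "A \<subseteq> space M" using A(1) sets.sets_into_space by auto
  have Bs: "\<And>i. i < l \<Longrightarrow> B i \<in> sets M" using Ahs A unfolding B_def by auto
  have djB: "disjoint_family_on B {..<l}"
    using dj unfolding disjoint_family_on_def B_def by auto
  have UB: "(\<Union>i<l. B i) = A" using U As unfolding B_def by auto
  have part: "ispart M A l B" unfolding ispart_def using Bs djB UB by auto
  have Bfin: "\<And>i. i < l \<Longrightarrow> emeasure M (B i) < \<infinity>" using ispart_fin[OF part A(2,1)] .
  let ?I = "\<lambda>i. \<integral>\<^sup>+ x. ennreal (\<bar>f x - a i\<bar> powr p) * indicator (B i) x \<partial>M"
  let ?E = "\<integral>\<^sup>+ x. ennreal (\<bar>f x - h x\<bar> powr p) \<partial>M"
  have Efin: "?E < \<infinity>" by (rule diff_fin[OF hm])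
  have mi: "(\<lambda>x. ennreal (\<bar>f x - a i\<bar> powr p) * indicator (B i) x) \<in> borel_measurable M" if "i < l" for i
    using Bs[OF that] by measurable
  have sumI: "(\<Sum>i<l. ?I i) \<le> ?E"
  proof -
    have "(\<Sum>i<l. ?I i) = (\<integral>\<^sup>+ x. (\<Sum>i<l. ennreal (\<bar>f x - a i\<bar> powr p) * indicator (B i) x) \<partial>M)"
      by (rule nn_integral_sum[symmetric]) (rule mi, simp)
    also have "\<dots> \<le> ?E"
    proof (rule nn_integral_mono)
      fix x assume x: "x \<in> space M"
      show "(\<Sum>i<l. ennreal (\<bar>f x - a i\<bar> powr p) * indicator (B i) x) \<le> ennreal (\<bar>f x - h x\<bar> powr p)"
      proof (cases "\<exists>j<l. x \<in> B j")
        case True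
        then obtain j where j: "j < l" "x \<in> B j" by auto
        have "(\<Sum>i<l. ennreal (\<bar>f x - a i\<bar> powr p) * indicator (B i) x) = ennreal (\<bar>f x - a j\<bar> powr p)"
          by (rule sum_indicator_single[OF djB j])
        moreover have "h x = a j" unfolding heq
          by (rule sum_indicator_single[OF dj j(1)]) (use j in \<open>simp add: B_def\<close>)
        ultimately show ?thesis by simp
      next
        case False
        then have "x \<notin> (\<Union>i<l. B i)" by auto
        then have "(\<Sum>i<l. ennreal (\<bar>f x - a i\<bar> powr p) * indicator (B i) x) = 0"
          by (rule sum_indicator_none)
        then show ?thesis by simp
      qed
    qed
    finally show ?thesis .
  qed
  have Ifin: "?I i < \<infinity>" if "i < l" for i
  proof -
    have "?I i \<le> (\<Sum>i<l. ?I i)" using that by (intro member_le_sum) auto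
    then show ?thesis using sumI Efin by (meson order.strict_trans1)
  qed
  have "(\<Sum>i<l. varp M p f (B i) powr p) \<le> (\<Sum>i<l. 2 powr p * enn2real (?I i))"
    by (intro sum_mono piece_bound Bs Bfin Ifin) auto
  also have "\<dots> = 2 powr p * enn2real (\<Sum>i<l. ?I i)"
  proof -
    have "enn2real (\<Sum>i<l. ?I i) = (\<Sum>i<l. enn2real (?I i))"
      using enn2real_sum[of "{..<l}" ?I] Ifin by (simp add: o_def)
    then show ?thesis by (simp add: sum_distrib_left)
  qed
  also have "\<dots> \<le> 2 powr p * enn2real ?E"
    using sumI Efin by (intro mult_left_mono enn2real_mono) auto
  finally have S: "(\<Sum>i<l. varp M p f (B i) powr p) \<le> 2 powr p * enn2real ?E" .
  have "varp_fam M p f l B \<le> (2 powr p * enn2real ?E) powr (1/p)"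
    unfolding varp_fam_def using S p by (intro powr_mono2) (auto intro: sum_nonneg)
  also have "\<dots> = 2 * Lp_dist M p f h"
    unfolding Lp_dist_def using p by (simp add: powr_mult powr_powr)
  finally have "varp_fam M p f l B \<le> 2 * Lp_dist M p f h" .
  moreover have "Varpk_on M p k f A \<le> varp_fam M p f l B" by (rule Varpk_on_le_fam[OF part lk])
  ultimately show ?thesis by linarith
qed

end




lemma Gpk_zero: "1 \<le> k \<Longrightarrow> (\<lambda>x. 0) \<in> Gpk M p k"
proof -
  assume k: "1 \<le> k"
  have m: "memLp M p (\<lambda>x. 0)" unfolding memLp_def by simp
  show ?thesis
    by (rule GpkI[OF m k, where A="\<lambda>_. space M" and a="\<lambda>_. 0"]) (auto simp: disjoint_family_on_def)
qed

lemma Lp_dist_nonneg: "0 \<le> Lp_dist M p f h"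
  unfolding Lp_dist_def by simp

lemma Dpk_le: "h \<in> Gpk M p k \<Longrightarrow> Dpk M p k f \<le> Lp_dist M p f h"
  unfolding Dpk_def
  by (rule cInf_lower) (auto intro!: bdd_belowI[of _ 0] simp: Lp_dist_nonneg)

lemma Dpk_ge: "1 \<le> k \<Longrightarrow> (\<And>h. h \<in> Gpk M p k \<Longrightarrow> c \<le> Lp_dist M p f h) \<Longrightarrow> c \<le> Dpk M p k f"
  unfolding Dpk_def
  by (rule cInf_greatest) (use Gpk_zero[of k M p] in blast)+

lemma Varpk_on_in: "A \<in> sets M \<Longrightarrow> emeasure M A < \<infinity> \<Longrightarrow>
   Varpk_on M p k f A \<in> {Varpk_on M p k f A | A. A \<in> sets M \<and> emeasure M A < \<infinity>}"
  by blast

lemma Varpk_on_le_Varpk: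
  assumes "A \<in> sets M" "emeasure M A < \<infinity>"
    and bdd: "bdd_above {Varpk_on M p k f A | A. A \<in> sets M \<and> emeasure M A < \<infinity>}"
  shows "Varpk_on M p k f A \<le> Varpk M p k f"
  unfolding Varpk_def by (rule cSup_upper[OF Varpk_on_in[OF assms(1,2)] bdd])

lemma Varpk_le:
  assumes "\<And>A. A \<in> sets M \<Longrightarrow> emeasure M A < \<infinity> \<Longrightarrow> Varpk_on M p k f A \<le> c"
  shows "Varpk M p k f \<le> c"
  unfolding Varpk_def
proof (rule cSup_least)
  show "{Varpk_on M p k f A | A. A \<in> sets M \<and> emeasure M A < \<infinity>} \<noteq> {}"
    using Varpk_on_in[of "{}" M p k f] by auto
qed (use assms in auto)

lemma Lp_le:
  assumes "(\<integral>\<^sup>+ x. ennreal (\<bar>f x - h x\<bar> powr p) \<partial>M) \<le> ennreal X" "0 \<le> X" "0 < p"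
  shows "Lp_dist M p f h \<le> X powr (1/p)"
proof -
  have "enn2real (\<integral>\<^sup>+ x. ennreal (\<bar>f x - h x\<bar> powr p) \<partial>M) \<le> X"
    using enn2real_mono[OF assms(1)] assms(2) by simp
  then show ?thesis unfolding Lp_dist_def using assms by (intro powr_mono2) auto
qed

context Lp_setting
begin

lemma Varpk_on_le_2D:
  assumes "1 \<le> k" "A \<in> sets M" "emeasure M A < \<infinity>"
  shows "Varpk_on M p k f A \<le> 2 * Dpk M p k f"
proof -
  have "Varpk_on M p k f A / 2 \<le> Dpk M p k f"
    by (rule Dpk_ge[OF assms(1)]) (use Varpk_on_le_Lp[OF assms(2,3)] in force)
  then show ?thesis by simp
qed

lemma Varpk_bdd:
  assumes "1 \<le> k"
  shows "bdd_above {Varpk_on M p k f A | A. A \<in> sets M \<and> emeasure M A < \<infinity>}"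
  by (rule bdd_aboveI[of _ "2 * Dpk M p k f"]) (use Varpk_on_le_2D[OF assms] in auto)

lemma Varpk_le_2D:
  assumes "1 \<le> k"
  shows "Varpk M p k f \<le> 2 * Dpk M p k f"
  by (rule Varpk_le) (rule Varpk_on_le_2D[OF assms])

lemma lower_step:
  assumes A: "A \<in> sets M" "emeasure M A < \<infinity>" and B: "ispart M A l B"
  shows "\<exists>m. (\<integral>\<^sup>+ x. ennreal (\<bar>f x - hstep m B l x\<bar> powr p) \<partial>M)
     \<le> ennreal (varp_fam M p f l B powr p) + (\<integral>\<^sup>+ x. ennreal (\<bar>f x\<bar> powr p) * indicator (space M - A) x \<partial>M)"
proof -
  have Bs: "\<And>i. i < l \<Longrightarrow> B i \<in> sets M" using B unfolding ispart_def by auto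
  have Bfin: "\<And>i. i < l \<Longrightarrow> emeasure M (B i) < \<infinity>" using ispart_fin[OF B A(2,1)] .
  have "\<forall>i. \<exists>c. i < l \<longrightarrow> (\<integral>\<^sup>+ x. ennreal (\<bar>f x - c\<bar> powr p) * indicator (B i) x \<partial>M) \<le> ennreal (varp M p f (B i) powr p)"
    using point_lemma[OF Bs Bfin] by blast
  then obtain m where m: "\<And>i. i < l \<Longrightarrow> (\<integral>\<^sup>+ x. ennreal (\<bar>f x - m i\<bar> powr p) * indicator (B i) x \<partial>M) \<le> ennreal (varp M p f (B i) powr p)"
    by metis
  have "(\<Sum>i<l. \<integral>\<^sup>+ x. ennreal (\<bar>f x - m i\<bar> powr p) * indicator (B i) x \<partial>M) \<le> (\<Sum>i<l. ennreal (varp M p f (B i) powr p))"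
    by (intro sum_mono m) auto
  also have "\<dots> = ennreal (\<Sum>i<l. varp M p f (B i) powr p)" by simp
  also have "(\<Sum>i<l. varp M p f (B i) powr p) = varp_fam M p f l B powr p"
    unfolding varp_fam_def using p by (simp add: powr_powr sum_nonneg)
  finally have S: "(\<Sum>i<l. \<integral>\<^sup>+ x. ennreal (\<bar>f x - m i\<bar> powr p) * indicator (B i) x \<partial>M) \<le> ennreal (varp_fam M p f l B powr p)" .
  show ?thesis
    by (rule exI[of _ m], subst err_eq[OF B A(1)]) (use S in \<open>rule add_right_mono\<close>)
qed

end




context Lp_setting
begin

lemma big_fin:
  assumes d: "0 < \<delta>"
  shows "emeasure M {x\<in>space M. \<delta> < \<bar>f x\<bar>} < \<infinity>"
proof -
  let ?S = "{x\<in>space M. \<delta> < \<bar>f x\<bar>}"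
  have Ss: "?S \<in> sets M" by measurable
  have "(\<integral>\<^sup>+ x. ennreal (\<delta> powr p) * indicator ?S x \<partial>M) \<le> (\<integral>\<^sup>+ x. ennreal (\<bar>f x\<bar> powr p) \<partial>M)"
  proof (rule nn_integral_mono)
    fix x assume "x \<in> space M"
    show "ennreal (\<delta> powr p) * indicator ?S x \<le> ennreal (\<bar>f x\<bar> powr p)"
    proof (cases "x \<in> ?S")
      case True
      then have "\<delta> powr p \<le> \<bar>f x\<bar> powr p" using d p by (intro powr_mono2) auto
      then show ?thesis using True by (simp add: ennreal_leI)
    qed simp
  qed
  then have "ennreal (\<delta> powr p) * emeasure M ?S < \<infinity>"
    using Nf_fin Ss by (simp add: nn_integral_cmult_indicator)
  moreover have "ennreal (\<delta> powr p) \<noteq> 0" using d by simp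
  ultimately show ?thesis by (auto simp: ennreal_mult_less_top)
qed

lemma tail_small:
  assumes e: "0 < (\<epsilon>::ennreal)"
  shows "\<exists>\<delta>>0. (\<integral>\<^sup>+ x. ennreal (\<bar>f x\<bar> powr p) * indicator {x\<in>space M. \<bar>f x\<bar> \<le> \<delta>} x \<partial>M) < \<epsilon>"
proof -
  define g where "g n x = ennreal (\<bar>f x\<bar> powr p) * indicator {x\<in>space M. \<bar>f x\<bar> \<le> 1 / real (Suc n)} x" for n x
  have gm: "g n \<in> borel_measurable M" for n unfolding g_def by measurable
  have dec: "decseq g"
  proof (rule decseq_SucI, rule le_funI)
    fix n x
    have "1 / real (Suc (Suc n)) \<le> 1 / real (Suc n)" by (simp add: frac_le)
    then show "g (Suc n) x \<le> g n x" unfolding g_def by (auto simp: indicator_def)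
  qed
  have gfin: "(\<integral>\<^sup>+ x. g n x \<partial>M) < \<infinity>" for n
  proof -
    have "(\<integral>\<^sup>+ x. g n x \<partial>M) \<le> (\<integral>\<^sup>+ x. ennreal (\<bar>f x\<bar> powr p) \<partial>M)"
      unfolding g_def by (intro nn_integral_mono) (auto simp: indicator_def)
    then show ?thesis using Nf_fin by (meson order.strict_trans1)
  qed
  have pw: "(INF i. g i x) = 0" for x
  proof -
    have "(INF i. g i x) \<le> 0"
    proof (cases "f x = 0")
      case True
      then have "g 0 x = 0" unfolding g_def using p by simp
      then show ?thesis by (metis INF_lower2 UNIV_I order_refl)
    next
      case False
      then obtain n where n: "inverse (real (Suc n)) < \<bar>f x\<bar>" using reals_Archimedean[of "\<bar>f x\<bar>"] by auto
      then have "g n x = 0" unfolding g_def by (auto simp: indicator_def field_simps)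
      then show ?thesis by (metis INF_lower2 UNIV_I order_refl)
    qed
    then show ?thesis by simp
  qed
  have "(\<integral>\<^sup>+ x. (INF i. g i x) \<partial>M) = (INF i. integral\<^sup>N M (g i))"
    by (rule nn_integral_monotone_convergence_INF_decseq[OF dec gm gfin])
  then have "(INF i. integral\<^sup>N M (g i)) = 0" unfolding pw by simp
  then have "(INF i. integral\<^sup>N M (g i)) < \<epsilon>" using e by simp
  then obtain i where "integral\<^sup>N M (g i) < \<epsilon>" by (auto simp: INF_less_iff)
  then show ?thesis unfolding g_def by (intro exI[of _ "1 / real (Suc i)"]) auto
qed

lemma part_i:
  assumes k: "1 \<le> k"
  shows "Dpk M p (k + 1) f \<le> Varpk M p k f"
proof (rule field_le_epsilon)
  fix e :: real assume e: "0 < e"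
  define \<eta> where "\<eta> = e / 2"
  have eta: "0 < \<eta>" using e by (simp add: \<eta>_def)
  obtain \<delta> where d: "0 < \<delta>"
    and tl: "(\<integral>\<^sup>+ x. ennreal (\<bar>f x\<bar> powr p) * indicator {x\<in>space M. \<bar>f x\<bar> \<le> \<delta>} x \<partial>M) < ennreal (\<eta> powr p)"
    using tail_small[of "ennreal (\<eta> powr p)"] eta by auto
  define A where "A = {x\<in>space M. \<delta> < \<bar>f x\<bar>}"
  have As: "A \<in> sets M" unfolding A_def by measurable
  have Af: "emeasure M A < \<infinity>" unfolding A_def by (rule big_fin[OF d])
  have cA: "space M - A = {x\<in>space M. \<bar>f x\<bar> \<le> \<delta>}" unfolding A_def by auto
  let ?P = "{varp_fam M p f l B | l B. l \<le> k \<and> (\<forall>i<l. B i \<in> sets M) \<and>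
       disjoint_family_on B {..<l} \<and> (\<Union>i<l. B i) = A}"
  have ne: "?P \<noteq> {}"
  proof -
    have "varp_fam M p f 1 (\<lambda>_. A) \<in> ?P"
      using As k by (intro CollectI exI[of _ 1] exI[of _ "\<lambda>_. A"]) (auto simp: disjoint_family_on_def)
    then show ?thesis by blast
  qed
  have "Inf ?P < Varpk_on M p k f A + \<eta>" unfolding Varpk_on_def using eta by simp
  then obtain v where "v \<in> ?P" "v < Varpk_on M p k f A + \<eta>" using cInf_lessD[OF ne] by blast
  then obtain l B where lk: "l \<le> k" and part: "ispart M A l B"
    and vf: "varp_fam M p f l B < Varpk_on M p k f A + \<eta>"
    unfolding ispart_def by blast
  obtain m where m: "(\<integral>\<^sup>+ x. ennreal (\<bar>f x - hstep m B l x\<bar> powr p) \<partial>M)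
     \<le> ennreal (varp_fam M p f l B powr p) + (\<integral>\<^sup>+ x. ennreal (\<bar>f x\<bar> powr p) * indicator (space M - A) x \<partial>M)"
    using lower_step[OF As Af part] by blast
  let ?v = "varp_fam M p f l B"
  have v0: "0 \<le> ?v" by (rule varp_fam_nonneg)
  have "(\<integral>\<^sup>+ x. ennreal (\<bar>f x - hstep m B l x\<bar> powr p) \<partial>M) \<le> ennreal (?v powr p) + ennreal (\<eta> powr p)"
    using m tl unfolding cA by (meson add_left_mono less_imp_le order_trans)
  also have "\<dots> = ennreal (?v powr p + \<eta> powr p)" by (simp add: ennreal_plus)
  finally have "Lp_dist M p f (hstep m B l) \<le> (?v powr p + \<eta> powr p) powr (1/p)"
    using p by (intro Lp_le) auto
  also have "\<dots> \<le> ((?v + \<eta>) powr p) powr (1/p)"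
    using p v0 eta by (intro powr_mono2 powr_superadd) auto
  also have "\<dots> = ?v + \<eta>" using p v0 eta by (simp add: powr_powr)
  finally have L: "Lp_dist M p f (hstep m B l) \<le> ?v + \<eta>" .
  have "hstep m B l \<in> Gpk M p (Suc l)" using hstep_Gpk_Suc[OF part Af As] p by simp
  also have "\<dots> \<subseteq> Gpk M p (k + 1)" using lk by (intro Gpk_mono) simp
  finally have "Dpk M p (k + 1) f \<le> Lp_dist M p f (hstep m B l)" by (rule Dpk_le)
  moreover have "Varpk_on M p k f A \<le> Varpk M p k f"
    by (rule Varpk_on_le_Varpk[OF As Af Varpk_bdd[OF k]])
  ultimately show "Dpk M p (k + 1) f \<le> Varpk M p k f + e"
    using L vf unfolding \<eta>_def by linarith
qed

lemma part_ii_1: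
  assumes k: "1 \<le> k" and fm: "emeasure M (space M) < \<infinity>"
  shows "Dpk M p k f \<le> Varpk_on M p k f (space M)"
  unfolding Varpk_on_def
proof (rule cInf_greatest)
  show "{varp_fam M p f l B | l B. l \<le> k \<and> (\<forall>i<l. B i \<in> sets M) \<and>
       disjoint_family_on B {..<l} \<and> (\<Union>i<l. B i) = space M} \<noteq> {}"
  proof -
    have "varp_fam M p f 1 (\<lambda>_. space M) \<in> {varp_fam M p f l B | l B. l \<le> k \<and> (\<forall>i<l. B i \<in> sets M) \<and>
       disjoint_family_on B {..<l} \<and> (\<Union>i<l. B i) = space M}"
      using k by (intro CollectI exI[of _ 1] exI[of _ "\<lambda>_. space M"]) (auto simp: disjoint_family_on_def)
    then show ?thesis by blast
  qed
next
  fix v assume "v \<in> {varp_fam M p f l B | l B. l \<le> k \<and> (\<forall>i<l. B i \<in> sets M) \<and>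
       disjoint_family_on B {..<l} \<and> (\<Union>i<l. B i) = space M}"
  then obtain l B where v: "v = varp_fam M p f l B" and lk: "l \<le> k" and part: "ispart M (space M) l B"
    unfolding ispart_def by blast
  obtain m where m: "(\<integral>\<^sup>+ x. ennreal (\<bar>f x - hstep m B l x\<bar> powr p) \<partial>M)
     \<le> ennreal (varp_fam M p f l B powr p) + (\<integral>\<^sup>+ x. ennreal (\<bar>f x\<bar> powr p) * indicator (space M - space M) x \<partial>M)"
    using lower_step[OF sets.top fm part] by blast
  then have "(\<integral>\<^sup>+ x. ennreal (\<bar>f x - hstep m B l x\<bar> powr p) \<partial>M) \<le> ennreal (varp_fam M p f l B powr p)"
    by simp
  then have "Lp_dist M p f (hstep m B l) \<le> (varp_fam M p f l B powr p) powr (1/p)"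
    using p by (intro Lp_le) auto
  also have "\<dots> = v" unfolding v using p varp_fam_nonneg[of M p f l B] by (simp add: powr_powr)
  finally have L: "Lp_dist M p f (hstep m B l) \<le> v" .
  have "hstep m B l \<in> Gpk M p l" using hstep_Gpk_space[OF part fm] p by simp
  also have "\<dots> \<subseteq> Gpk M p k" using lk by (rule Gpk_mono)
  finally show "Dpk M p k f \<le> v" using L Dpk_le by (meson order_trans)
qed

end




lemma big_subset:
  assumes noatom: "\<not> (\<exists>A. is_atom M A \<and> emeasure M A = \<infinity>)"
    and E: "E \<in> sets M" "emeasure M E = \<infinity>"
  shows "\<exists>D\<in>sets M. D \<subseteq> E \<and> ennreal R \<le> emeasure M D \<and> emeasure M D < \<infinity>"
proof -
  define \<F> where "\<F> = {F\<in>sets M. F \<subseteq> E \<and> emeasure M F < \<infinity>}"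
  define s where "s = (SUP F\<in>\<F>. emeasure M F)"
  have "{} \<in> \<F>" unfolding \<F>_def by simp
  then have ne: "\<F> \<noteq> {}" by blast
  show ?thesis
  proof (cases "s = \<infinity>")
    case True
    have "ennreal R < s" using True by simp
    then obtain F where "F \<in> \<F>" "ennreal R < emeasure M F" unfolding s_def by (auto simp: less_SUP_iff)
    then show ?thesis unfolding \<F>_def by (auto intro: less_imp_le)
  next
    case False
    then have sfin: "s < \<infinity>" by (simp add: top.not_eq_extremum)
    obtain g :: "nat \<Rightarrow> ennreal" where g: "range g \<subseteq> emeasure M ` \<F>" "s = Sup (range g)"
      using ennreal_SUP_countable_SUP[OF ne, of "emeasure M"] unfolding s_def by auto
    have "\<forall>n. \<exists>F. F \<in> \<F> \<and> g n = emeasure M F" using g(1) by auto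
    then have "\<exists>F. \<forall>n. F n \<in> \<F> \<and> g n = emeasure M (F n)" by (rule choice)
    then obtain F where F': "\<forall>n. F n \<in> \<F> \<and> g n = emeasure M (F n)" by blast
    then have F: "\<And>n. F n \<in> \<F>" "\<And>n. g n = emeasure M (F n)" by auto
    have Fs: "\<And>n. F n \<in> sets M" "\<And>n. F n \<subseteq> E" "\<And>n. emeasure M (F n) < \<infinity>"
      using F(1) unfolding \<F>_def by auto
    define G where "G n = (\<Union>i\<le>n. F i)" for n
    have Gs: "G n \<in> sets M" for n unfolding G_def using Fs by auto
    have GF: "G n \<in> \<F>" for n
    proof -
      have "emeasure M (G n) \<le> (\<Sum>i\<le>n. emeasure M (F i))"
        unfolding G_def by (rule emeasure_subadditive_finite) (use Fs in auto)
      also have "\<dots> < \<infinity>" using Fs(3) by simp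
      finally show ?thesis unfolding \<F>_def using Gs Fs(2) G_def by auto
    qed
    have inc: "incseq G" unfolding G_def incseq_def by (auto intro: order_trans)
    define Ginf where "Ginf = (\<Union>n. G n)"
    have Ginf_s: "Ginf \<in> sets M" unfolding Ginf_def using Gs by auto
    have Ginf_sub: "Ginf \<subseteq> E" unfolding Ginf_def G_def using Fs(2) by auto
    have "emeasure M Ginf = (SUP n. emeasure M (G n))"
      unfolding Ginf_def by (rule SUP_emeasure_incseq[symmetric]) (use Gs inc in auto)
    also have "\<dots> \<le> s" unfolding s_def by (intro SUP_least SUP_upper GF)
    finally have Gle: "emeasure M Ginf \<le> s" .
    have Gge: "s \<le> emeasure M Ginf"
      unfolding g(2)
    proof (rule SUP_least)
      fix n
      have "F n \<subseteq> Ginf" unfolding Ginf_def G_def by auto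
      then show "g n \<le> emeasure M Ginf" using F(2) Ginf_s by (simp add: emeasure_mono)
    qed
    have Gfin: "emeasure M Ginf < \<infinity>" using Gle sfin by simp
    have rest: "emeasure M (E - Ginf) = \<infinity>"
    proof (rule ccontr)
      assume "emeasure M (E - Ginf) \<noteq> \<infinity>"
      moreover have "emeasure M E \<le> emeasure M Ginf + emeasure M (E - Ginf)"
      proof -
        have "emeasure M E \<le> emeasure M (Ginf \<union> (E - Ginf))" using E Ginf_s by (intro emeasure_mono) auto
        also have "\<dots> \<le> emeasure M Ginf + emeasure M (E - Ginf)"
          using E Ginf_s by (intro emeasure_subadditive) auto
        finally show ?thesis .
      qed
      ultimately have "emeasure M Ginf + emeasure M (E - Ginf) < \<infinity>"
        using Gfin by (simp add: top.not_eq_extremum)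
      then have "emeasure M E < \<infinity>" using \<open>emeasure M E \<le> _\<close> by (rule le_less_trans[rotated])
      then show False using E(2) by simp
    qed
    have EGs: "E - Ginf \<in> sets M" using E Ginf_s by auto
    have "\<not> is_atom M (E - Ginf)" using noatom rest by auto
    then have "\<not> (\<forall>B\<in>sets M. B \<subseteq> E - Ginf \<longrightarrow> emeasure M B < emeasure M (E - Ginf) \<longrightarrow> emeasure M B = 0)"
      using EGs rest unfolding is_atom_def by simp
    then obtain B where B: "B \<in> sets M" "B \<subseteq> E - Ginf" "emeasure M B < emeasure M (E - Ginf)" "emeasure M B \<noteq> 0"
      by blast
    have Bfin: "emeasure M B < \<infinity>" using B(3) rest by simp
    have "emeasure M Ginf + emeasure M B = emeasure M (Ginf \<union> B)"
      using B Ginf_s by (intro plus_emeasure) auto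
    also have "\<dots> \<le> s"
    proof -
      have "emeasure M (Ginf \<union> B) \<le> emeasure M Ginf + emeasure M B"
        using B Ginf_s by (intro emeasure_subadditive) auto
      also have "\<dots> < \<infinity>" using Gfin Bfin by simp
      finally have "Ginf \<union> B \<in> \<F>" unfolding \<F>_def using B Ginf_s Ginf_sub by auto
      then show ?thesis unfolding s_def by (rule SUP_upper)
    qed
    also have "\<dots> \<le> emeasure M Ginf + 0" using Gge by simp
    finally have "emeasure M B \<le> 0" using Gfin by (auto simp add: ennreal_add_left_cancel_le)
    then show ?thesis using B(4) by simp
  qed
qed




context Lp_setting
begin

lemma V_lower:
  assumes Bs: "B \<in> sets M" "S \<in> sets M" "D \<in> sets M" and t: "0 \<le> t" "t \<le> 1"
    and sep: "\<And>x y. x \<in> S \<Longrightarrow> y \<in> D \<Longrightarrow> (1 - t) * \<bar>f x\<bar> \<le> \<bar>f x - f y\<bar>"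
  shows "ennreal ((1 - t) powr p) * emeasure M (B \<inter> D) * (\<integral>\<^sup>+ x. ennreal (\<bar>f x\<bar> powr p) * indicator (B \<inter> S) x \<partial>M) \<le> V B"
proof -
  let ?c = "\<lambda>x. ennreal (((1 - t) * \<bar>f x\<bar>) powr p)"
  have "(\<integral>\<^sup>+ x. (\<integral>\<^sup>+ y. ?c x * indicator (B \<inter> D) y \<partial>M) * indicator (B \<inter> S) x \<partial>M) \<le> V B"
    unfolding V_def
  proof (rule nn_integral_mono)
    fix x assume "x \<in> space M"
    show "(\<integral>\<^sup>+ y. ?c x * indicator (B \<inter> D) y \<partial>M) * indicator (B \<inter> S) x
      \<le> (\<integral>\<^sup>+ y. ennreal (\<bar>f x - f y\<bar> powr p) * indicator B y \<partial>M) * indicator B x"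
    proof (cases "x \<in> B \<inter> S")
      case True
      have "(\<integral>\<^sup>+ y. ?c x * indicator (B \<inter> D) y \<partial>M) \<le> (\<integral>\<^sup>+ y. ennreal (\<bar>f x - f y\<bar> powr p) * indicator B y \<partial>M)"
      proof (rule nn_integral_mono)
        fix y assume "y \<in> space M"
        show "?c x * indicator (B \<inter> D) y \<le> ennreal (\<bar>f x - f y\<bar> powr p) * indicator B y"
        proof (cases "y \<in> B \<inter> D")
          case True
          have "((1 - t) * \<bar>f x\<bar>) powr p \<le> \<bar>f x - f y\<bar> powr p"
            using sep[of x y] True \<open>x \<in> B \<inter> S\<close> t p by (intro powr_mono2) auto
          then show ?thesis using True by (simp add: ennreal_leI)
        qed simp
      qed
      then show ?thesis using True by simp
    qed simp
  qed
  also have "(\<integral>\<^sup>+ x. (\<integral>\<^sup>+ y. ?c x * indicator (B \<inter> D) y \<partial>M) * indicator (B \<inter> S) x \<partial>M)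
     = (\<integral>\<^sup>+ x. (ennreal ((1 - t) powr p) * emeasure M (B \<inter> D)) * (ennreal (\<bar>f x\<bar> powr p) * indicator (B \<inter> S) x) \<partial>M)"
  proof (rule nn_integral_cong)
    fix x
    have e1: "(\<integral>\<^sup>+ y. ?c x * indicator (B \<inter> D) y \<partial>M) = ?c x * emeasure M (B \<inter> D)"
      using Bs by (intro nn_integral_cmult_indicator) auto
    have e2: "?c x = ennreal ((1 - t) powr p) * ennreal (\<bar>f x\<bar> powr p)"
      using t by (simp add: powr_mult ennreal_mult)
    show "(\<integral>\<^sup>+ y. ?c x * indicator (B \<inter> D) y \<partial>M) * indicator (B \<inter> S) x
      = (ennreal ((1 - t) powr p) * emeasure M (B \<inter> D)) * (ennreal (\<bar>f x\<bar> powr p) * indicator (B \<inter> S) x)"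
      unfolding e1 unfolding e2 by (simp only: mult_ac)
  qed
  also have "\<dots> = ennreal ((1 - t) powr p) * emeasure M (B \<inter> D) * (\<integral>\<^sup>+ x. ennreal (\<bar>f x\<bar> powr p) * indicator (B \<inter> S) x \<partial>M)"
  proof (rule nn_integral_cmult)
    show "(\<lambda>x. ennreal (\<bar>f x\<bar> powr p) * indicator (B \<inter> S) x) \<in> borel_measurable M"
      using Bs by measurable
  qed
  finally show ?thesis by (simp add: mult_ac)
qed

end




context Lp_setting
begin

lemma part_iii_core:
  assumes k: "1 \<le> k" and inf: "emeasure M (space M) = \<infinity>"
    and noatom: "\<not> (\<exists>A. is_atom M A \<and> emeasure M A = \<infinity>)"
    and t: "0 < t" "t < 1/2"
  shows "Dpk M p k f \<le> (1 - t) powr (- (p + 1) / p) * (Varpk M p k f + t) + (2 * t) powr (1 / p)"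
proof -
  obtain \<delta> where d: "0 < \<delta>"
    and tl: "(\<integral>\<^sup>+ x. ennreal (\<bar>f x\<bar> powr p) * indicator {x\<in>space M. \<bar>f x\<bar> \<le> \<delta>} x \<partial>M) < ennreal t"
    using tail_small[of "ennreal t"] t by auto
  define T where "T = {x\<in>space M. \<bar>f x\<bar> \<le> \<delta>}"
  define \<tau> where "\<tau> = (\<integral>\<^sup>+ x. ennreal (\<bar>f x\<bar> powr p) * indicator T x \<partial>M)"
  have tau: "\<tau> < ennreal t" using tl unfolding \<tau>_def T_def .
  have Ts: "T \<in> sets M" unfolding T_def by measurable
  define S where "S = {x\<in>space M. \<delta> < \<bar>f x\<bar>}"
  have Ss: "S \<in> sets M" unfolding S_def by measurable
  have Sf: "emeasure M S < \<infinity>" unfolding S_def by (rule big_fin[OF d])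
  define E where "E = {x\<in>space M. \<bar>f x\<bar> \<le> t * \<delta>}"
  have Es: "E \<in> sets M" unfolding E_def by measurable
  have Einf: "emeasure M E = \<infinity>"
  proof (rule ccontr)
    assume "emeasure M E \<noteq> \<infinity>"
    then have Ef: "emeasure M E < \<infinity>" by (simp add: top.not_eq_extremum)
    have F: "emeasure M {x\<in>space M. t * \<delta> < \<bar>f x\<bar>} < \<infinity>" using t d by (intro big_fin) simp
    have "emeasure M (space M) \<le> emeasure M (E \<union> {x\<in>space M. t * \<delta> < \<bar>f x\<bar>})"
      using Es by (intro emeasure_mono) (auto simp: E_def)
    also have "\<dots> \<le> emeasure M E + emeasure M {x\<in>space M. t * \<delta> < \<bar>f x\<bar>}"
      using Es by (intro emeasure_subadditive) auto
    also have "\<dots> < \<infinity>" using Ef F by simp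
    finally show False using inf by simp
  qed
  define R where "R = real k * measure M S / t + 1"
  obtain D where Ds: "D \<in> sets M" "D \<subseteq> E" "ennreal R \<le> emeasure M D" "emeasure M D < \<infinity>"
    using big_subset[OF noatom Es Einf, of R] by blast
  define A where "A = S \<union> D"
  have As: "A \<in> sets M" unfolding A_def using Ss Ds by auto
  have Af: "emeasure M A < \<infinity>"
  proof -
    have "emeasure M A \<le> emeasure M S + emeasure M D" unfolding A_def using Ss Ds by (intro emeasure_subadditive)
    also have "\<dots> < \<infinity>" using Sf Ds by simp
    finally show ?thesis .
  qed
  have tdd: "t * \<delta> < \<delta>" using t d by simp
  have sep: "(1 - t) * \<bar>f x\<bar> \<le> \<bar>f x - f y\<bar>" if "x \<in> S" "y \<in> D" for x y
  proof -
    have fx: "\<delta> < \<bar>f x\<bar>" using that unfolding S_def by auto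
    have "\<bar>f y\<bar> \<le> t * \<delta>" using that Ds(2) unfolding E_def by auto
    also have "\<dots> \<le> t * \<bar>f x\<bar>" using fx t by (intro mult_left_mono) auto
    finally have "\<bar>f y\<bar> \<le> t * \<bar>f x\<bar>" .
    then show ?thesis by (simp add: algebra_simps)
  qed
  let ?P = "{varp_fam M p f l B | l B. l \<le> k \<and> (\<forall>i<l. B i \<in> sets M) \<and>
       disjoint_family_on B {..<l} \<and> (\<Union>i<l. B i) = A}"
  have ne: "?P \<noteq> {}"
  proof -
    have "varp_fam M p f 1 (\<lambda>_. A) \<in> ?P"
      using As k by (intro CollectI exI[of _ 1] exI[of _ "\<lambda>_. A"]) (auto simp: disjoint_family_on_def)
    then show ?thesis by blast
  qed
  have "Inf ?P < Varpk_on M p k f A + t" unfolding Varpk_on_def using t by simp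
  then obtain v where "v \<in> ?P" "v < Varpk_on M p k f A + t" using cInf_lessD[OF ne] by blast
  then obtain l B where lk: "l \<le> k" and part: "ispart M A l B"
    and vf: "varp_fam M p f l B < Varpk_on M p k f A + t"
    unfolding ispart_def by blast
  have Bs: "\<And>i. i < l \<Longrightarrow> B i \<in> sets M" and dj: "disjoint_family_on B {..<l}" and U: "(\<Union>i<l. B i) = A"
    using part unfolding ispart_def by auto
  have Bfin: "\<And>i. i < l \<Longrightarrow> emeasure M (B i) < \<infinity>" using ispart_fin[OF part Af As] .
  have l0: "0 < l"
  proof (rule ccontr)
    assume "\<not> 0 < l"
    then have "A = {}" using U by simp
    then have "emeasure M D = 0" unfolding A_def by simp
    moreover have "0 < R" unfolding R_def using t by (simp add: add_nonneg_pos)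
    ultimately show False using Ds(3) by simp
  qed
  obtain j where j: "j < l" and jmax: "\<And>i. i < l \<Longrightarrow> emeasure M (B i) \<le> emeasure M (B j)"
  proof -
    let ?X = "(\<lambda>i. emeasure M (B i)) ` {..<l}"
    have fin: "finite ?X" and nX: "?X \<noteq> {}" using l0 by auto
    then have "Max ?X \<in> ?X" by (rule Max_in)
    then obtain j where "j < l" "emeasure M (B j) = Max ?X" by auto
    moreover have "\<And>i. i < l \<Longrightarrow> emeasure M (B i) \<le> Max ?X" using fin by (intro Max_ge) auto
    ultimately show ?thesis using that by auto
  qed
  define mBj where "mBj = measure M (B j)"
  have eBj: "emeasure M (B j) = ennreal mBj" unfolding mBj_def using Bfin[OF j] by (simp add: emeasure_eq_ennreal_measure)
  have "emeasure M D \<le> emeasure M A" unfolding A_def using Ss Ds by (intro emeasure_mono) auto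
  also have "emeasure M A = (\<Sum>i<l. emeasure M (B i))"
  proof -
    have "B ` {..<l} \<subseteq> sets M" using Bs by auto
    then show ?thesis using sum_emeasure[of B "{..<l}" M] dj U by simp
  qed
  also have "\<dots> \<le> (\<Sum>i<l. emeasure M (B j))" by (intro sum_mono jmax) auto
  also have "\<dots> = of_nat l * emeasure M (B j)" by simp
  also have "\<dots> \<le> of_nat k * emeasure M (B j)" using lk by (intro mult_right_mono) auto
  also have "\<dots> = ennreal (real k * mBj)" unfolding eBj by (simp add: ennreal_mult[symmetric] ennreal_of_nat_eq_real_of_nat mBj_def)
  finally have "ennreal R \<le> ennreal (real k * mBj)" using Ds(3) by (rule order_trans[rotated])
  then have Rle: "R \<le> real k * mBj" unfolding mBj_def by (simp add: ennreal_le_iff)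
  have kpos: "0 < real k" using k by simp
  have "real k * measure M S / t < real k * mBj" using Rle unfolding R_def by simp
  then have "real k * measure M S < real k * mBj * t" using t by (simp add: divide_less_eq)
  then have "real k * measure M S < real k * (mBj * t)" by (simp add: mult_ac)
  then have SmB: "measure M S < mBj * t" using kpos by simp
  have mBpos: "0 < mBj" using SmB t measure_nonneg[of M S] by (smt (verit) mult_nonpos_nonneg)
  have BjD: "(1 - t) * mBj \<le> measure M (B j \<inter> D)"
  proof -
    have Bsub: "B j \<subseteq> S \<union> (B j \<inter> D)" using U j unfolding A_def by auto
    have fS: "emeasure M S \<noteq> \<infinity>" using Sf by simp
    have fBD: "emeasure M (B j \<inter> D) \<noteq> \<infinity>"
      using Bfin[OF j] emeasure_mono[of "B j \<inter> D" "B j" M] Bs[OF j] by (simp add: top.not_eq_extremum)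
    have "mBj \<le> measure M (S \<union> (B j \<inter> D))"
      unfolding mBj_def using Bsub Bs[OF j] Ss Ds fS fBD
      by (intro measure_mono_fmeasurable) (auto simp: fmeasurable_def top.not_eq_extremum
          intro: le_less_trans[OF emeasure_subadditive])
    also have "\<dots> \<le> measure M S + measure M (B j \<inter> D)"
      using Ss Bs[OF j] Ds fS fBD by (intro measure_subadditive) auto
    finally show ?thesis using SmB by (simp add: algebra_simps)
  qed
  define J where "J = (\<integral>\<^sup>+ x. ennreal (\<bar>f x\<bar> powr p) * indicator (B j \<inter> S) x \<partial>M)"
  have Jfin: "J < \<infinity>"
  proof -
    have "J \<le> (\<integral>\<^sup>+ x. ennreal (\<bar>f x\<bar> powr p) \<partial>M)"
      unfolding J_def by (intro nn_integral_mono) (auto simp: indicator_def)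
    then show ?thesis using Nf_fin by (meson order.strict_trans1)
  qed
  have VL: "ennreal ((1 - t) powr p) * emeasure M (B j \<inter> D) * J \<le> V (B j)"
    unfolding J_def using t by (intro V_lower Bs[OF j] Ss Ds(1) sep) auto
  have fBD: "emeasure M (B j \<inter> D) < \<infinity>"
    using Bfin[OF j] emeasure_mono[of "B j \<inter> D" "B j" M] Bs[OF j] by (simp add: top.not_eq_extremum)
  define c0 where "c0 = (1 - t) powr (p + 1)"
  have c0pos: "0 < c0" unfolding c0_def using t by simp
  have c0le: "c0 \<le> 1" unfolding c0_def using t p by (intro powr_le1) auto
  have c0eq: "c0 = (1 - t) powr p * (1 - t)" unfolding c0_def using t by (simp add: powr_add)
  have Jr: "enn2real J \<le> varp M p f (B j) powr p / c0"
  proof -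
    have "ennreal ((1 - t) powr p * measure M (B j \<inter> D) * enn2real J)
        = ennreal ((1 - t) powr p) * emeasure M (B j \<inter> D) * J"
    proof -
      have eBD: "emeasure M (B j \<inter> D) = ennreal (measure M (B j \<inter> D))"
        by (rule emeasure_eq_ennreal_measure) (use fBD in simp)
      have eJ: "J = ennreal (enn2real J)" by (rule ennreal_enn2real[symmetric]) (use Jfin in simp)
      have "ennreal ((1 - t) powr p * measure M (B j \<inter> D) * enn2real J)
          = ennreal ((1 - t) powr p) * ennreal (measure M (B j \<inter> D)) * ennreal (enn2real J)"
        by (simp add: ennreal_mult)
      then show ?thesis by (simp only: eBD[symmetric] eJ[symmetric])
    qed
    also note VL
    finally have le1: "ennreal ((1 - t) powr p * measure M (B j \<inter> D) * enn2real J) \<le> V (B j)" .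
    have "enn2real (ennreal ((1 - t) powr p * measure M (B j \<inter> D) * enn2real J)) \<le> enn2real (V (B j))"
      by (rule enn2real_mono[OF le1]) (use V_fin[OF Bs[OF j] Bfin[OF j]] in simp)
    then have "(1 - t) powr p * measure M (B j \<inter> D) * enn2real J \<le> enn2real (V (B j))"
      by simp
    moreover have "(1 - t) powr p * ((1 - t) * mBj) * enn2real J \<le> (1 - t) powr p * measure M (B j \<inter> D) * enn2real J"
      using BjD by (intro mult_right_mono mult_left_mono) auto
    ultimately have "c0 * mBj * enn2real J \<le> enn2real (V (B j))" unfolding c0eq by (simp add: mult_ac)
    then have "enn2real J \<le> enn2real (V (B j)) / mBj / c0"
      using c0pos mBpos by (simp add: le_divide_eq mult_ac)
    also have "enn2real (V (B j)) / mBj = varp M p f (B j) powr p"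
      using varp_pow[OF Bs[OF j] Bfin[OF j]] eBj mBpos unfolding mBj_def by simp
    finally show ?thesis .
  qed
  have "\<forall>i. \<exists>c. i < l \<longrightarrow> (\<integral>\<^sup>+ x. ennreal (\<bar>f x - c\<bar> powr p) * indicator (B i) x \<partial>M) \<le> ennreal (varp M p f (B i) powr p)"
    using point_lemma[OF Bs Bfin] by blast
  then have "\<exists>m. \<forall>i. i < l \<longrightarrow> (\<integral>\<^sup>+ x. ennreal (\<bar>f x - m i\<bar> powr p) * indicator (B i) x \<partial>M) \<le> ennreal (varp M p f (B i) powr p)"
    by (rule choice)
  then obtain m0 where m0: "\<And>i. i < l \<Longrightarrow> (\<integral>\<^sup>+ x. ennreal (\<bar>f x - m0 i\<bar> powr p) * indicator (B i) x \<partial>M) \<le> ennreal (varp M p f (B i) powr p)"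
    by blast
  define m where "m = m0(j := 0)"
  define w where "w i = varp M p f (B i) powr p / c0" for i
  have w0: "0 \<le> w i" for i unfolding w_def using c0pos by simp
  define I where "I i = (\<integral>\<^sup>+ x. ennreal (\<bar>f x - m i\<bar> powr p) * indicator (B i) x \<partial>M)" for i
  have Iother: "I i \<le> ennreal (w i)" if "i < l" "i \<noteq> j" for i
  proof -
    have "I i \<le> ennreal (varp M p f (B i) powr p)" unfolding I_def m_def using m0[OF that(1)] that(2) by simp
    also have "varp M p f (B i) powr p \<le> w i" unfolding w_def using c0pos c0le
      by (simp add: le_divide_eq mult_left_le)
    finally show ?thesis by (simp add: ennreal_leI)
  qed
  have Ij: "I j \<le> ennreal (w j) + \<tau>"
  proof -
    have "I j = (\<integral>\<^sup>+ x. ennreal (\<bar>f x\<bar> powr p) * indicator (B j) x \<partial>M)" unfolding I_def m_def by simp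
    also have "\<dots> \<le> (\<integral>\<^sup>+ x. ennreal (\<bar>f x\<bar> powr p) * indicator (B j \<inter> S) x + ennreal (\<bar>f x\<bar> powr p) * indicator T x \<partial>M)"
    proof (rule nn_integral_mono)
      fix x assume x: "x \<in> space M"
      show "ennreal (\<bar>f x\<bar> powr p) * indicator (B j) x \<le> ennreal (\<bar>f x\<bar> powr p) * indicator (B j \<inter> S) x + ennreal (\<bar>f x\<bar> powr p) * indicator T x"
      proof (cases "x \<in> B j")
        case True
        show ?thesis
        proof (cases "x \<in> S")
          case True then show ?thesis using \<open>x \<in> B j\<close> by simp
        next
          case False
          then have "x \<in> T" using x unfolding S_def T_def by auto
          then show ?thesis using \<open>x \<in> B j\<close> by simp
        qed
      qed simp
    qed
    also have "\<dots> = J + \<tau>" unfolding J_def \<tau>_def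
    proof (rule nn_integral_add)
      show "(\<lambda>x. ennreal (\<bar>f x\<bar> powr p) * indicator (B j \<inter> S) x) \<in> borel_measurable M"
        using Ss Bs[OF j] by measurable
      show "(\<lambda>x. ennreal (\<bar>f x\<bar> powr p) * indicator T x) \<in> borel_measurable M"
        using Ts by measurable
    qed
    finally have m1: "I j \<le> J + \<tau>" .
    have eJ: "J = ennreal (enn2real J)" by (rule ennreal_enn2real[symmetric]) (use Jfin in simp)
    have "ennreal (enn2real J) \<le> ennreal (w j)" unfolding w_def using Jr by (rule ennreal_leI)
    then have Jw: "J \<le> ennreal (w j)" using eJ by simp
    have "J + \<tau> \<le> ennreal (w j) + \<tau>" using Jw by (rule add_right_mono)
    then show ?thesis using m1 by (rule order_trans[rotated])
  qed
  have sumI: "(\<Sum>i<l. I i) \<le> ennreal (\<Sum>i<l. w i) + \<tau>"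
  proof -
    have "(\<Sum>i<l. I i) \<le> (\<Sum>i<l. ennreal (w i) + (if i = j then \<tau> else 0))"
    proof (rule sum_mono)
      fix i assume "i \<in> {..<l}"
      then show "I i \<le> ennreal (w i) + (if i = j then \<tau> else 0)"
        using Iother[of i] Ij by (cases "i = j") auto
    qed
    also have "\<dots> = (\<Sum>i<l. ennreal (w i)) + \<tau>" using j by (simp add: sum.distrib)
    also have "(\<Sum>i<l. ennreal (w i)) = ennreal (\<Sum>i<l. w i)" using w0 by simp
    finally show ?thesis .
  qed
  have tailA: "(\<integral>\<^sup>+ x. ennreal (\<bar>f x\<bar> powr p) * indicator (space M - A) x \<partial>M) \<le> \<tau>"
    unfolding \<tau>_def
  proof (rule nn_integral_mono)
    fix x assume x: "x \<in> space M"
    show "ennreal (\<bar>f x\<bar> powr p) * indicator (space M - A) x \<le> ennreal (\<bar>f x\<bar> powr p) * indicator T x"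
    proof (cases "x \<in> A")
      case False
      then have "x \<in> T" using x unfolding A_def S_def T_def by auto
      then show ?thesis by (simp add: indicator_def)
    qed simp
  qed
  let ?v = "varp_fam M p f l B"
  have v0: "0 \<le> ?v" by (rule varp_fam_nonneg)
  have sumw: "(\<Sum>i<l. w i) = ?v powr p / c0"
  proof -
    have "(\<Sum>i<l. w i) = (\<Sum>i<l. varp M p f (B i) powr p) / c0" unfolding w_def by (simp add: sum_divide_distrib)
    also have "(\<Sum>i<l. varp M p f (B i) powr p) = ?v powr p"
      unfolding varp_fam_def using p by (simp add: powr_powr sum_nonneg)
    finally show ?thesis .
  qed
  have "(\<integral>\<^sup>+ x. ennreal (\<bar>f x - hstep m B l x\<bar> powr p) \<partial>M) = (\<Sum>i<l. I i) + (\<integral>\<^sup>+ x. ennreal (\<bar>f x\<bar> powr p) * indicator (space M - A) x \<partial>M)"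
    unfolding I_def by (rule err_eq[OF part As])
  also have "\<dots> \<le> (ennreal (\<Sum>i<l. w i) + \<tau>) + \<tau>" using sumI tailA by (rule add_mono)
  also have "\<dots> \<le> (ennreal (\<Sum>i<l. w i) + ennreal t) + ennreal t"
    using tau by (intro add_mono order_refl less_imp_le)
  also have "\<dots> = ennreal (?v powr p / c0 + 2 * t)"
  proof -
    have X0: "0 \<le> ?v powr p / c0" using c0pos by simp
    have a1: "ennreal (?v powr p / c0 + 2 * t) = ennreal (?v powr p / c0) + ennreal (2 * t)"
      by (rule ennreal_plus) (use X0 t in auto)
    have a2: "ennreal (2 * t) = ennreal t + ennreal t"
      unfolding mult_2 by (rule ennreal_plus) (use t in auto)
    show ?thesis unfolding a1 a2 sumw by (rule add.assoc)
  qed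
  finally have "Lp_dist M p f (hstep m B l) \<le> (?v powr p / c0 + 2 * t) powr (1 / p)"
    by (rule Lp_le) (use p t c0pos in auto)
  also have "\<dots> \<le> (?v powr p / c0) powr (1 / p) + (2 * t) powr (1 / p)"
    by (rule powr_subadd_root) (use p t c0pos in auto)
  also have "(?v powr p / c0) powr (1 / p) = ?v * (1 - t) powr (- (p + 1) / p)"
  proof -
    have "(?v powr p / c0) powr (1 / p) = (?v powr p) powr (1/p) / c0 powr (1 / p)"
      using c0pos by (simp add: powr_divide)
    also have "(?v powr p) powr (1/p) = ?v" using v0 p by (simp add: powr_powr)
    also have "c0 powr (1 / p) = (1 - t) powr ((p + 1) / p)" unfolding c0_def using t by (simp add: powr_powr)
    also have "?v / (1 - t) powr ((p + 1) / p) = ?v * (1 - t) powr (- (p + 1) / p)"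
    proof -
      have "- (p + 1) / p = - ((p + 1) / p)" by (rule minus_divide_left[symmetric])
      then have "(1 - t) powr (- (p + 1) / p) = inverse ((1 - t) powr ((p + 1) / p))"
        using powr_minus[of "1 - t" "(p + 1) / p"] by simp
      then show ?thesis by (simp add: divide_inverse)
    qed
    finally show ?thesis .
  qed
  also have "?v * (1 - t) powr (- (p + 1) / p) \<le> (Varpk M p k f + t) * (1 - t) powr (- (p + 1) / p)"
  proof (rule mult_right_mono)
    have "Varpk_on M p k f A \<le> Varpk M p k f" by (rule Varpk_on_le_Varpk[OF As Af Varpk_bdd[OF k]])
    then show "?v \<le> Varpk M p k f + t" using vf by linarith
  qed simp
  finally have L: "Lp_dist M p f (hstep m B l) \<le> (1 - t) powr (- (p + 1) / p) * (Varpk M p k f + t) + (2 * t) powr (1 / p)"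
    by (simp add: mult_ac)
  have "hstep m B l \<in> Gpk M p l" using hstep_Gpk_zero[OF part Af As _ j] p by (simp add: m_def)
  also have "\<dots> \<subseteq> Gpk M p k" using lk by (rule Gpk_mono)
  finally have "Dpk M p k f \<le> Lp_dist M p f (hstep m B l)" by (rule Dpk_le)
  then show ?thesis using L by linarith
qed

end





context Lp_setting
begin

lemma part_iii_inf:
  assumes k: "1 \<le> k" and inf: "emeasure M (space M) = \<infinity>"
    and noatom: "\<not> (\<exists>A. is_atom M A \<and> emeasure M A = \<infinity>)"
  shows "Dpk M p k f \<le> Varpk M p k f"
proof -
  let ?V = "Varpk M p k f"
  let ?c = "- (p + 1) / p"
  have l0: "((\<lambda>t::real. 1 - t) \<longlongrightarrow> 1) (at_right 0)"
    using tendsto_diff[OF tendsto_const[of "1::real"] tendsto_ident_at[of 0 "{0<..}"]] by simp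
  have l1: "((\<lambda>t::real. (1 - t) powr ?c) \<longlongrightarrow> 1) (at_right 0)"
    using tendsto_powr[OF l0 tendsto_const[of ?c], of] by simp
  have l2: "((\<lambda>t::real. ?V + t) \<longlongrightarrow> ?V) (at_right 0)"
    using tendsto_add[OF tendsto_const[of ?V] tendsto_ident_at[of 0 "{0<..}"]] by simp
  have l3: "((\<lambda>t::real. (2 * t) powr (1 / p)) \<longlongrightarrow> 0) (at_right 0)"
  proof (rule tendsto_zero_powrI)
    show "((\<lambda>t::real. 2 * t) \<longlongrightarrow> 0) (at_right 0)"
      using tendsto_mult[OF tendsto_const[of "2::real"] tendsto_ident_at[of 0 "{0<..}"]] by simp
    show "\<forall>\<^sub>F x in at_right 0. 0 \<le> 2 * (x::real)"
      by (simp add: eventually_at_right_less less_imp_le eventually_mono[OF eventually_at_right_less])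
    show "0 < 1 / p" using p by simp
  qed simp
  have lim: "((\<lambda>t. (1 - t) powr ?c * (?V + t) + (2 * t) powr (1 / p)) \<longlongrightarrow> 1 * ?V + 0) (at_right 0)"
    by (intro tendsto_add tendsto_mult l1 l2 l3)
  have ev: "\<forall>\<^sub>F t in at_right 0. Dpk M p k f \<le> (1 - t) powr ?c * (?V + t) + (2 * t) powr (1 / p)"
    unfolding eventually_at_right_field
  proof (rule exI[of _ "1/2"], intro conjI allI impI)
    show "(0::real) < 1/2" by simp
    fix y :: real assume "0 < y" "y < 1/2"
    then show "Dpk M p k f \<le> (1 - y) powr ?c * (?V + y) + (2 * y) powr (1 / p)"
      by (rule part_iii_core[OF k inf noatom])
  qed
  show ?thesis
    using tendsto_le[OF trivial_limit_at_right_real lim tendsto_const ev] by simp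
qed

end


theorem proposition3p5:
  fixes M :: "'a measure" and p :: real and k :: nat and f :: "'a \<Rightarrow> real"
  assumes nonzero: "emeasure M (space M) \<noteq> 0"
    and p: "1 \<le> p" and k: "1 \<le> k"
    and f: "memLp M p f"
  shows "(Dpk M p (k + 1) f \<le> Varpk M p k f \<and> Varpk M p k f \<le> 2 * Dpk M p k f) \<and>
         (finite_measure M \<longrightarrow>
           Dpk M p k f \<le> Varpk_on M p k f (space M) \<and>
           Varpk_on M p k f (space M) \<le> Varpk M p k f \<and>
           Varpk M p k f \<le> 2 * Dpk M p k f \<and>
           2 * Dpk M p k f \<le> 2 * Varpk_on M p k f (space M)) \<and>
         ((\<not> (\<exists>A. is_atom M A \<and> emeasure M A = \<infinity>)) \<longrightarrow>
           Dpk M p k f \<le> Varpk M p k f \<and> Varpk M p k f \<le> 2 * Dpk M p k f)"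
proof -
  interpret L: Lp_setting M p f using p f by unfold_locales
  have i1: "Dpk M p (k + 1) f \<le> Varpk M p k f" by (rule L.part_i[OF k])
  have i2: "Varpk M p k f \<le> 2 * Dpk M p k f" by (rule L.Varpk_le_2D[OF k])
  have fin: "Dpk M p k f \<le> Varpk_on M p k f (space M) \<and> Varpk_on M p k f (space M) \<le> Varpk M p k f"
    if fs: "emeasure M (space M) < \<infinity>"
  proof
    show "Dpk M p k f \<le> Varpk_on M p k f (space M)" by (rule L.part_ii_1[OF k fs])
    show "Varpk_on M p k f (space M) \<le> Varpk M p k f"
      by (rule Varpk_on_le_Varpk[OF sets.top fs L.Varpk_bdd[OF k]])
  qed
  have ii: "finite_measure M \<longrightarrow>
           Dpk M p k f \<le> Varpk_on M p k f (space M) \<and>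
           Varpk_on M p k f (space M) \<le> Varpk M p k f \<and>
           Varpk M p k f \<le> 2 * Dpk M p k f \<and>
           2 * Dpk M p k f \<le> 2 * Varpk_on M p k f (space M)"
  proof
    assume "finite_measure M"
    then have fs: "emeasure M (space M) < \<infinity>"
      using finite_measure.emeasure_finite[of M "space M"] by (simp add: top.not_eq_extremum)
    show "Dpk M p k f \<le> Varpk_on M p k f (space M) \<and>
           Varpk_on M p k f (space M) \<le> Varpk M p k f \<and>
           Varpk M p k f \<le> 2 * Dpk M p k f \<and>
           2 * Dpk M p k f \<le> 2 * Varpk_on M p k f (space M)"
      using fin[OF fs] i2 by simp
  qed
  have iii: "(\<not> (\<exists>A. is_atom M A \<and> emeasure M A = \<infinity>)) \<longrightarrow>
           Dpk M p k f \<le> Varpk M p k f \<and> Varpk M p k f \<le> 2 * Dpk M p k f"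
  proof
    assume na: "\<not> (\<exists>A. is_atom M A \<and> emeasure M A = \<infinity>)"
    have "Dpk M p k f \<le> Varpk M p k f"
    proof (cases "emeasure M (space M) = \<infinity>")
      case True
      then show ?thesis by (rule L.part_iii_inf[OF k _ na])
    next
      case False
      then have "emeasure M (space M) < \<infinity>" by (simp add: top.not_eq_extremum)
      from fin[OF this] show ?thesis by linarith
    qed
    then show "Dpk M p k f \<le> Varpk M p k f \<and> Varpk M p k f \<le> 2 * Dpk M p k f" using i2 by simp
  qed
  show ?thesis using i1 i2 ii iii by blast
qed


end
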